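(* Let $n\in\{1,\dots,5\}$. Every homogeneous invariant $F\in K[X_n]^{G_n}$ of degree $d$ is an invariant of weight $k$, where $d=k$ if $n=1,2,3$, $d=2k$ if $n=4$, and $d=5k$ if $n=5$. In particular $K[X_n]^{G_n}=\bigoplus_{k\ge0}K[X_n]^{G_n}_k$, where $K[X_n]^{G_n}_k$ is the space of invariants of weight $k$.
   Context: Let $K$ be a perfect field with algebraic closure $\overline K$. Genus one models and groups: (n=1) $\phi=(a_1,a_2,a_3,a_4,a_6)$, model $y^2+a_1xy+a_3y=x^3+a_2x^2+a_4x+a_6$; $\mathcal G_1$ consists of $[u;r,s,t]$, $u\ne0$, acting by substituting $x=u^2x'+r$, $y=u^3y'+u^2sx'+t$ and dividing by $u^6$; $\det[u;r,s,t]=u^{-1}$. (n=2) $\phi=(p,q)$, $p=\alpha_0x^2+\alpha_1xz+\alpha_2z^2$, $q=ax^4+bx^3z+cx^2z^2+dxz^3+ez^4$, model $y^2+p(x,z)y=q(x,z)$; $\mathcal G_2$ consists of $[\mu,r,B]$, acting by substituting $x=B_{11}x'+B_{21}z'$, $z=B_{12}x'+B_{22}z'$, $y=\mu^{-1}y'+r_0x'^2+r_1x'z'+r_2z'^2$ and multiplying by $\mu^2$; $\det=\mu\det B$. (n=3) ternary cubic $f$; $\mathcal G_3=\mathbb G_m\times\mathrm{GL}_3$, $[\mu,B]f=\mu f$ after substituting $x_j=\sum_iB_{ij}x_i'$; $\det=\mu\det B$. (n=4) pair of quadratic forms $\phi=(q_1,q_2)^T$ in 4 variables; $\mathcal G_4=\mathrm{GL}_2\times\mathrm{GL}_4$,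 $[A,B]$: $\phi\mapsto A\phi$ with $x_j=\sum_iB_{ij}x_i'$; $\det=\det A\det B$. (n=5) $5\times5$ alternating matrix $\phi$ of linear forms in 5 variables; $\mathcal G_5=\mathrm{GL}_5\times\mathrm{GL}_5$, $[A,B]$: $\phi\mapsto A\phi A^T$ with $x_j=\sum_iB_{ij}x_i'$; $\det=(\det A)^2\det B$. $G_n$ is the commutator subgroup: $G_1=\{[1;r,s,t]\}$, $G_2=\{[1,r,B]:B\in\mathrm{SL}_2\}$, $G_3=\mathrm{SL}_3$, $G_4=\mathrm{SL}_2\times\mathrm{SL}_4$, $G_5=\mathrm{SL}_5\times\mathrm{SL}_5$. $K[X_n]$ is the polynomial ring in the coefficients, graded by $\deg a_i=i$ ($n=1$), $\deg\alpha_i=1$, $\deg a=\dots=\deg e=2$ ($n=2$), and usual degree for $n=3,4,5$. $K[X_n]^{G_n}=\{F:F\circ g=F\ \forall g\in G_n(\overline K)\}$; $F$ is an invariant of weight $k$ if $F\circ g=(\det g)^kF$ for all $g\in\mathcal G_n(\overline K)$. *)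

theory Defs
  imports "HOL-Library.Poly_Mapping" "HOL-Computational_Algebra.Polynomial"
          "Jordan_Normal_Form.Determinant"
begin

text \<open>The ambient field type 'a plays the role of the algebraic closure of K;
  K is a subfield of 'a over which every element of 'a is algebraic.\<close>

definition alg_closed_field_type :: "'a::field itself \<Rightarrow> bool" where
  "alg_closed_field_type _ \<longleftrightarrow>
     (\<forall>p :: 'a poly. degree p \<ge> 1 \<longrightarrow> (\<exists>x. poly p x = 0))"

definition subfield :: "'a::field set \<Rightarrow> bool" where
  "subfield K \<longleftrightarrow> 0 \<in> K \<and> 1 \<in> K \<and>
     (\<forall>x\<in>K. \<forall>y\<in>K. x + y \<in> K \<and> x - y \<in> K \<and> x * y \<in> K) \<and>
     (\<forall>x\<in>K. x \<noteq> 0 \<longrightarrow> inverse x \<in> K)"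

definition is_algebraic_closure_of :: "'a::field set \<Rightarrow> bool" where
  "is_algebraic_closure_of K \<longleftrightarrow> subfield K \<and> alg_closed_field_type TYPE('a) \<and>
     (\<forall>x::'a. \<exists>p. p \<noteq> 0 \<and> (\<forall>i. coeff p i \<in> K) \<and> poly p x = 0)"

definition perfect_field :: "'a::field set \<Rightarrow> bool" where
  "perfect_field K \<longleftrightarrow> CHAR('a) = 0 \<or> (\<forall>x\<in>K. \<exists>y\<in>K. y ^ CHAR('a) = x)"

type_synonym 'a mpoly = "(nat \<Rightarrow>\<^sub>0 nat) \<Rightarrow>\<^sub>0 'a"

definition Var :: "nat \<Rightarrow> 'a::comm_semiring_1 mpoly" where
  "Var i = Poly_Mapping.single (Poly_Mapping.single i 1) 1"

definition Const :: "'a::comm_semiring_1 \<Rightarrow> 'a mpoly" where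
  "Const c = Poly_Mapping.single 0 c"

definition Mon :: "(nat \<Rightarrow>\<^sub>0 nat) \<Rightarrow> 'a::comm_semiring_1 mpoly" where
  "Mon m = Poly_Mapping.single m 1"

definition mon :: "nat list \<Rightarrow> (nat \<Rightarrow>\<^sub>0 nat)" where
  "mon es = (\<Sum>i<length es. Poly_Mapping.single i (es ! i))"

definition mpeval :: "(nat \<Rightarrow> 'a::comm_semiring_1) \<Rightarrow> 'a mpoly \<Rightarrow> 'a" where
  "mpeval x p = (\<Sum>m\<in>Poly_Mapping.keys p.
      Poly_Mapping.lookup p m * (\<Prod>i\<in>Poly_Mapping.keys m. x i ^ Poly_Mapping.lookup m i))"

definition msubst :: "(nat \<Rightarrow> 'a::comm_semiring_1 mpoly) \<Rightarrow> 'a mpoly \<Rightarrow> 'a mpoly" where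
  "msubst \<sigma> p = (\<Sum>m\<in>Poly_Mapping.keys p.
      Const (Poly_Mapping.lookup p m) * (\<Prod>i\<in>Poly_Mapping.keys m. \<sigma> i ^ Poly_Mapping.lookup m i))"

definition linsubst :: "nat \<Rightarrow> 'a::comm_ring_1 mat \<Rightarrow> nat \<Rightarrow> 'a mpoly" where
  "linsubst nv B j = (\<Sum>i<nv. Const (B $$ (i, j)) * Var i)"

text \<open>A group element is encoded uniformly as a triple (c, A, B) of a list of
  scalars and two matrices:
  n=1: c=[u,r,s,t], A and B are 0x0;
  n=2: c=[mu,r0,r1,r2], A is 0x0, B is 2x2;
  n=3: c=[mu], A is 0x0, B is 3x3;
  n=4: c=[], A is 2x2, B is 4x4;
  n=5: c=[], A is 5x5, B is 5x5.\<close>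

type_synonym 'a gelt = "'a list \<times> 'a mat \<times> 'a mat"

definition Gcal :: "nat \<Rightarrow> 'a::field gelt set" where
  "Gcal n = {(c, A, B).
     (n = 1 \<and> length c = 4 \<and> c ! 0 \<noteq> 0 \<and> A = zero_mat 0 0 \<and> B = zero_mat 0 0) \<or>
     (n = 2 \<and> length c = 4 \<and> c ! 0 \<noteq> 0 \<and> A = zero_mat 0 0 \<and> B \<in> carrier_mat 2 2 \<and> det B \<noteq> 0) \<or>
     (n = 3 \<and> length c = 1 \<and> c ! 0 \<noteq> 0 \<and> A = zero_mat 0 0 \<and> B \<in> carrier_mat 3 3 \<and> det B \<noteq> 0) \<or>
     (n = 4 \<and> c = [] \<and> A \<in> carrier_mat 2 2 \<and> det A \<noteq> 0 \<and> B \<in> carrier_mat 4 4 \<and> det B \<noteq> 0) \<or>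
     (n = 5 \<and> c = [] \<and> A \<in> carrier_mat 5 5 \<and> det A \<noteq> 0 \<and> B \<in> carrier_mat 5 5 \<and> det B \<noteq> 0)}"

definition Gcomm :: "nat \<Rightarrow> 'a::field gelt set" where
  "Gcomm n = {(c, A, B). (c, A, B) \<in> Gcal n \<and>
     (n = 1 \<longrightarrow> c ! 0 = 1) \<and>
     (n = 2 \<longrightarrow> c ! 0 = 1 \<and> det B = 1) \<and>
     (n = 3 \<longrightarrow> c ! 0 = 1 \<and> det B = 1) \<and>
     (n = 4 \<longrightarrow> det A = 1 \<and> det B = 1) \<and>
     (n = 5 \<longrightarrow> det A = 1 \<and> det B = 1)}"

text \<open>Note: for n=3 the group is G_m x GL_3 and its commutator subgroup SL_3
  is embedded as mu = 1.\<close>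

definition gdet :: "nat \<Rightarrow> 'a::field gelt \<Rightarrow> 'a" where
  "gdet n g = (case g of (c, A, B) \<Rightarrow>
     (if n = 1 then inverse (c ! 0)
      else if n = 2 \<or> n = 3 then c ! 0 * det B
      else if n = 4 then det A * det B
      else (det A)^2 * det B))"

definition Ndim :: "nat \<Rightarrow> nat" where
  "Ndim n = (if n = 1 then 5 else if n = 2 then 8 else if n = 3 then 10
             else if n = 4 then 20 else 50)"

text \<open>Grading weights of the coordinates.  n=1: (a1,a2,a3,a4,a6) at
  positions 0..4; n=2: (alpha0,alpha1,alpha2,a,b,c,d,e) at positions 0..7.\<close>
definition wt :: "nat \<Rightarrow> nat \<Rightarrow> nat" where
  "wt n i = (if n = 1 then [1,2,3,4,6] ! i
             else if n = 2 then (if i < 3 then 1 else 2) else 1)"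

definition wfac :: "nat \<Rightarrow> nat" where
  "wfac n = (if n = 4 then 2 else if n = 5 then 5 else 1)"

text \<open>Monomial lists for ternary cubics and quaternary quadrics; pair list
  for the upper triangle of a 5x5 alternating matrix.\<close>
definition mons3 :: "(nat \<Rightarrow>\<^sub>0 nat) list" where
  "mons3 = concat (map (\<lambda>i. map (\<lambda>j. mon [i, j, 3 - i - j]) [0..<4 - i]) [0..<4])"

definition mons4 :: "(nat \<Rightarrow>\<^sub>0 nat) list" where
  "mons4 = concat (map (\<lambda>i. map (\<lambda>j. Poly_Mapping.single i 1 + Poly_Mapping.single j 1) [i..<4]) [0..<4])"

definition pairs5 :: "(nat \<times> nat) list" where
  "pairs5 = concat (map (\<lambda>i. map (\<lambda>j. (i, j)) [Suc i..<5]) [0..<5])"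

definition weq1 :: "(nat \<Rightarrow> 'a::field) \<Rightarrow> 'a mpoly" where
  "weq1 \<phi> = Var 1 ^ 2 + Const (\<phi> 0) * Var 0 * Var 1 + Const (\<phi> 2) * Var 1
     - Var 0 ^ 3 - Const (\<phi> 1) * Var 0 ^ 2 - Const (\<phi> 3) * Var 0 - Const (\<phi> 4)"

definition act1 :: "'a::field gelt \<Rightarrow> (nat \<Rightarrow> 'a) \<Rightarrow> (nat \<Rightarrow> 'a)" where
  "act1 g \<phi> = (case g of (c, A, B) \<Rightarrow>
     let u = c ! 0; r = c ! 1; s = c ! 2; t = c ! 3;
         \<sigma> = (\<lambda>i. if i = 0 then Const (u^2) * Var 0 + Const r
                  else if i = 1 then Const (u^3) * Var 1 + Const (u^2 * s) * Var 0 + Const t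
                  else Var i);
         P = Const (inverse (u ^ 6)) * msubst \<sigma> (weq1 \<phi>)
     in (\<lambda>i. if i = 0 then Poly_Mapping.lookup P (mon [1,1])
             else if i = 1 then - Poly_Mapping.lookup P (mon [2,0])
             else if i = 2 then Poly_Mapping.lookup P (mon [0,1])
             else if i = 3 then - Poly_Mapping.lookup P (mon [1,0])
             else if i = 4 then - Poly_Mapping.lookup P (mon [0,0])
             else 0))"

(* n = 2: variables x = 0, z = 1, y = 2 *)
definition weq2 :: "(nat \<Rightarrow> 'a::field) \<Rightarrow> 'a mpoly" where
  "weq2 \<phi> = Var 2 ^ 2
     + (\<Sum>i<3. Const (\<phi> i) * Mon (mon [2 - i, i])) * Var 2
     - (\<Sum>j<5. Const (\<phi> (3 + j)) * Mon (mon [4 - j, j]))"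

definition act2 :: "'a::field gelt \<Rightarrow> (nat \<Rightarrow> 'a) \<Rightarrow> (nat \<Rightarrow> 'a)" where
  "act2 g \<phi> = (case g of (c, A, B) \<Rightarrow>
     let \<mu> = c ! 0;
         \<sigma> = (\<lambda>i. if i = 0 then Const (B $$ (0,0)) * Var 0 + Const (B $$ (1,0)) * Var 1
                  else if i = 1 then Const (B $$ (0,1)) * Var 0 + Const (B $$ (1,1)) * Var 1
                  else if i = 2 then Const (inverse \<mu>) * Var 2 + Const (c ! 1) * Var 0 ^ 2
                        + Const (c ! 2) * Var 0 * Var 1 + Const (c ! 3) * Var 1 ^ 2
                  else Var i);
         P = Const (\<mu> ^ 2) * msubst \<sigma> (weq2 \<phi>)
     in (\<lambda>i. if i < 3 then Poly_Mapping.lookup P (mon [2 - i, i, 1])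
             else if i < 8 then - Poly_Mapping.lookup P (mon [4 - (i - 3), i - 3, 0])
             else 0))"

definition cubic3 :: "(nat \<Rightarrow> 'a::field) \<Rightarrow> 'a mpoly" where
  "cubic3 \<phi> = (\<Sum>t<10. Const (\<phi> t) * Mon (mons3 ! t))"

definition act3 :: "'a::field gelt \<Rightarrow> (nat \<Rightarrow> 'a) \<Rightarrow> (nat \<Rightarrow> 'a)" where
  "act3 g \<phi> = (case g of (c, A, B) \<Rightarrow>
     let P = Const (c ! 0) * msubst (linsubst 3 B) (cubic3 \<phi>)
     in (\<lambda>t. if t < 10 then Poly_Mapping.lookup P (mons3 ! t) else 0))"

definition quad4 :: "(nat \<Rightarrow> 'a::field) \<Rightarrow> nat \<Rightarrow> 'a mpoly" where
  "quad4 \<phi> a = (\<Sum>t<10. Const (\<phi> (10 * a + t)) * Mon (mons4 ! t))"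

definition act4 :: "'a::field gelt \<Rightarrow> (nat \<Rightarrow> 'a) \<Rightarrow> (nat \<Rightarrow> 'a)" where
  "act4 g \<phi> = (case g of (c, A, B) \<Rightarrow>
     let Q = (\<lambda>a. \<Sum>b<2. Const (A $$ (a, b)) * msubst (linsubst 4 B) (quad4 \<phi> b))
     in (\<lambda>i. if i < 20 then Poly_Mapping.lookup (Q (i div 10)) (mons4 ! (i mod 10)) else 0))"

(* n = 5: entry (i,j), i<j, at pair index p = position of (i,j) in pairs5,
   has linear form sum_l phi(5p+l) x_l *)
definition alt5 :: "(nat \<Rightarrow> 'a::field) \<Rightarrow> nat \<Rightarrow> nat \<Rightarrow> 'a mpoly" where
  "alt5 \<phi> i j = (\<Sum>p<10. \<Sum>l<5.
      (if pairs5 ! p = (i, j) then Const (\<phi> (5 * p + l)) * Var l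
       else if pairs5 ! p = (j, i) then - Const (\<phi> (5 * p + l)) * Var l
       else 0))"

definition act5 :: "'a::field gelt \<Rightarrow> (nat \<Rightarrow> 'a) \<Rightarrow> (nat \<Rightarrow> 'a)" where
  "act5 g \<phi> = (case g of (c, A, B) \<Rightarrow>
     let M = (\<lambda>i j. \<Sum>k<5. \<Sum>l<5. Const (A $$ (i, k) * A $$ (j, l)) * alt5 \<phi> k l)
     in (\<lambda>t. if t < 50 then
               Poly_Mapping.lookup
                 (msubst (linsubst 5 B) (M (fst (pairs5 ! (t div 5))) (snd (pairs5 ! (t div 5)))))
                 (Poly_Mapping.single (t mod 5) 1)
             else 0))"

definition act :: "nat \<Rightarrow> 'a::field gelt \<Rightarrow> (nat \<Rightarrow> 'a) \<Rightarrow> (nat \<Rightarrow> 'a)" where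
  "act n = (if n = 1 then act1 else if n = 2 then act2 else if n = 3 then act3
            else if n = 4 then act4 else act5)"

definition KX :: "nat \<Rightarrow> 'a::field set \<Rightarrow> 'a mpoly set" where
  "KX n K = {F. (\<forall>m. Poly_Mapping.lookup F m \<in> K) \<and>
               (\<forall>m\<in>Poly_Mapping.keys F. \<forall>i\<in>Poly_Mapping.keys m. i < Ndim n)}"

definition homogeneous :: "nat \<Rightarrow> nat \<Rightarrow> 'a::field mpoly \<Rightarrow> bool" where
  "homogeneous n d F \<longleftrightarrow> (\<forall>m\<in>Poly_Mapping.keys F.
      (\<Sum>i\<in>Poly_Mapping.keys m. wt n i * Poly_Mapping.lookup m i) = d)"

text \<open>F o g = F for all g in G_n(Kbar) (as functions on Kbar^N; equivalent to
  equality of polynomials since Kbar is infinite).\<close>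
definition Gn_invariant :: "nat \<Rightarrow> 'a::field mpoly \<Rightarrow> bool" where
  "Gn_invariant n F \<longleftrightarrow> (\<forall>g\<in>Gcomm n. \<forall>\<phi>. mpeval (act n g \<phi>) F = mpeval \<phi> F)"

definition weight_invariant :: "nat \<Rightarrow> nat \<Rightarrow> 'a::field mpoly \<Rightarrow> bool" where
  "weight_invariant n k F \<longleftrightarrow>
     (\<forall>g\<in>Gcal n. \<forall>\<phi>. mpeval (act n g \<phi>) F = gdet n g ^ k * mpeval \<phi> F)"

end

theory Submission
  imports Defs
begin

definition monv :: "(nat \<Rightarrow> 'a::comm_semiring_1) \<Rightarrow> (nat \<Rightarrow>\<^sub>0 nat) \<Rightarrow> 'a" where
  "monv x m = (\<Prod>i\<in>Poly_Mapping.keys m. x i ^ Poly_Mapping.lookup m i)"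

lemma monv_superset:
  assumes "finite S" "Poly_Mapping.keys m \<subseteq> S"
  shows "monv x m = (\<Prod>i\<in>S. x i ^ Poly_Mapping.lookup m i)"
  unfolding monv_def
  by (rule prod.mono_neutral_left) (use assms in \<open>auto simp: in_keys_iff\<close>)

lemma monv_add: "monv x (m + m') = monv x m * monv x m'"
proof -
  let ?S = "Poly_Mapping.keys m \<union> Poly_Mapping.keys m'"
  have "monv x (m + m') = (\<Prod>i\<in>?S. x i ^ Poly_Mapping.lookup (m + m') i)"
    by (rule monv_superset) (auto dest: set_mp[OF keys_add])
  also have "\<dots> = (\<Prod>i\<in>?S. x i ^ Poly_Mapping.lookup m i) * (\<Prod>i\<in>?S. x i ^ Poly_Mapping.lookup m' i)"
    by (simp add: lookup_add power_add prod.distrib)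
  also have "\<dots> = monv x m * monv x m'"
    by (subst (1 2) monv_superset[of ?S]) auto
  finally show ?thesis .
qed

lemma monv_zero[simp]: "monv x 0 = 1"
  by (simp add: monv_def)

lemma monv_single[simp]: "monv x (Poly_Mapping.single i k) = x i ^ k"
  by (simp add: monv_def)

lemma mpeval_monv: "mpeval x p = (\<Sum>m\<in>Poly_Mapping.keys p. Poly_Mapping.lookup p m * monv x m)"
  by (simp add: mpeval_def monv_def)

lemma mpeval_superset:
  assumes "finite S" "Poly_Mapping.keys p \<subseteq> S"
  shows "mpeval x p = (\<Sum>m\<in>S. Poly_Mapping.lookup p m * monv x m)"
  unfolding mpeval_monv
  by (rule sum.mono_neutral_left) (use assms in \<open>auto simp: in_keys_iff\<close>)

lemma mpeval_zero[simp]: "mpeval x 0 = 0"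
  by (simp add: mpeval_def)

lemma mpeval_add[simp]: "mpeval x (p + q) = mpeval x p + mpeval x q"
proof -
  let ?S = "Poly_Mapping.keys p \<union> Poly_Mapping.keys q"
  have "mpeval x (p + q) = (\<Sum>m\<in>?S. Poly_Mapping.lookup (p + q) m * monv x m)"
    by (rule mpeval_superset) (auto dest: set_mp[OF keys_add])
  also have "\<dots> = (\<Sum>m\<in>?S. Poly_Mapping.lookup p m * monv x m) + (\<Sum>m\<in>?S. Poly_Mapping.lookup q m * monv x m)"
    by (simp add: lookup_add distrib_right sum.distrib)
  also have "\<dots> = mpeval x p + mpeval x q"
    by (subst (1 2) mpeval_superset[of ?S]) auto
  finally show ?thesis .
qed

lemma mpeval_uminus[simp]: "mpeval x (- p) = - mpeval x (p::'a::comm_ring_1 mpoly)"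
proof -
  have "mpeval x (- p) = (\<Sum>m\<in>Poly_Mapping.keys p. Poly_Mapping.lookup (-p) m * monv x m)"
    by (rule mpeval_superset) (auto simp: in_keys_iff)
  then show ?thesis by (simp add: mpeval_monv sum_negf)
qed

lemma mpeval_diff[simp]: "mpeval x (p - q) = mpeval x p - mpeval x (q::'a::comm_ring_1 mpoly)"
  using mpeval_add[of x p "-q"] by simp

lemma mpeval_single[simp]: "mpeval x (Poly_Mapping.single m a) = a * monv x m"
  by (simp add: mpeval_monv)

lemma mpeval_sum: "mpeval x (\<Sum>i\<in>A. f i) = (\<Sum>i\<in>A. mpeval x (f i))"
  by (induction A rule: infinite_finite_induct) auto

lemma poly_mapping_expand:
  "p = (\<Sum>m\<in>Poly_Mapping.keys p. Poly_Mapping.single m (Poly_Mapping.lookup p m))"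
proof (rule poly_mapping_eqI)
  fix k
  have "Poly_Mapping.lookup (\<Sum>m\<in>Poly_Mapping.keys p. Poly_Mapping.single m (Poly_Mapping.lookup p m)) k
     = (\<Sum>m\<in>Poly_Mapping.keys p. if m = k then Poly_Mapping.lookup p m else 0)"
    by (simp add: lookup_sum lookup_single when_def eq_commute)
  also have "\<dots> = Poly_Mapping.lookup p k"
    by (simp add: sum.delta' in_keys_iff)
  finally show "Poly_Mapping.lookup p k = Poly_Mapping.lookup (\<Sum>m\<in>Poly_Mapping.keys p. Poly_Mapping.single m (Poly_Mapping.lookup p m)) k"
    by simp
qed

lemma mpeval_mult[simp]: "mpeval x (p * q) = mpeval x p * mpeval x (q::'a::comm_semiring_1 mpoly)"
proof -
  have "p * q = (\<Sum>a\<in>Poly_Mapping.keys p. Poly_Mapping.single a (Poly_Mapping.lookup p a)) *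
                (\<Sum>b\<in>Poly_Mapping.keys q. Poly_Mapping.single b (Poly_Mapping.lookup q b))"
    by (subst (1) poly_mapping_expand, subst (2) poly_mapping_expand) (rule refl)
  also have "\<dots> = (\<Sum>a\<in>Poly_Mapping.keys p. \<Sum>b\<in>Poly_Mapping.keys q.
        Poly_Mapping.single (a + b) (Poly_Mapping.lookup p a * Poly_Mapping.lookup q b))"
    by (simp add: sum_product mult_single)
  finally have "mpeval x (p * q) = (\<Sum>a\<in>Poly_Mapping.keys p. \<Sum>b\<in>Poly_Mapping.keys q.
        (Poly_Mapping.lookup p a * monv x a) * (Poly_Mapping.lookup q b * monv x b))"
    by (simp add: mpeval_sum monv_add mult_ac)
  then show ?thesis by (simp add: mpeval_monv sum_product)
qed

lemma one_mpoly: "(1 :: 'a::comm_semiring_1 mpoly) = Poly_Mapping.single 0 1"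
  by (rule poly_mapping_eqI) (simp add: lookup_one lookup_single when_def)

lemma mpeval_one[simp]: "mpeval x 1 = (1::'a::comm_semiring_1)"
  by (simp only: one_mpoly mpeval_single monv_zero mult_1)

lemma mpeval_power[simp]: "mpeval x (p ^ k) = mpeval x (p::'a::comm_semiring_1 mpoly) ^ k"
  by (induction k) auto

lemma mpeval_prod: "mpeval x (\<Prod>i\<in>A. f i) = (\<Prod>i\<in>A. mpeval x (f i :: 'a::comm_semiring_1 mpoly))"
  by (induction A rule: infinite_finite_induct) auto

lemma mpeval_Const[simp]: "mpeval x (Const c) = c"
  by (simp add: Const_def)

lemma mpeval_Var[simp]: "mpeval x (Var i) = x i"
  by (simp add: Var_def)

lemma mpeval_Mon[simp]: "mpeval x (Mon m) = monv x m"
  by (simp add: Mon_def)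

lemma mpeval_msubst: "mpeval x (msubst \<sigma> p) = mpeval (\<lambda>i. mpeval x (\<sigma> i)) p"
proof -
  have "mpeval x (msubst \<sigma> p) = (\<Sum>m\<in>Poly_Mapping.keys p. Poly_Mapping.lookup p m *
     (\<Prod>i\<in>Poly_Mapping.keys m. mpeval x (\<sigma> i) ^ Poly_Mapping.lookup m i))"
    unfolding msubst_def
    by (simp only: mpeval_sum mpeval_mult mpeval_prod mpeval_power mpeval_Const)
  then show ?thesis by (simp only: mpeval_def[of "\<lambda>i. mpeval x (\<sigma> i)"])
qed


lemma lookup_Const_mult[simp]: "Poly_Mapping.lookup (Const c * p) m = c * Poly_Mapping.lookup p (m::nat\<Rightarrow>\<^sub>0nat)"
  unfolding Const_def mult_map_scale_conv_mult[symmetric]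
  by transfer (simp add: when_def)

lemma digits_bound:
  fixes f :: "nat \<Rightarrow> nat"
  assumes "B > 0" "\<forall>i<N. f i < B"
  shows "(\<Sum>i<N. f i * B ^ i) < B ^ N"
  using assms(2)
proof (induction N)
  case 0 then show ?case by simp
next
  case (Suc N)
  have fN: "f N < B" using Suc.prems by simp
  have IH: "(\<Sum>i<N. f i * B ^ i) < B ^ N" using Suc.IH Suc.prems by simp
  have "(\<Sum>i<Suc N. f i * B ^ i) = (\<Sum>i<N. f i * B ^ i) + f N * B ^ N" by (simp only: sum.lessThan_Suc)
  also have "\<dots> < B ^ N + f N * B ^ N" using IH by (simp only: add_less_cancel_right)
  also have "\<dots> = (Suc (f N)) * B ^ N" by (simp only: mult_Suc)
  also have "\<dots> \<le> B * B ^ N" using fN by (intro mult_right_mono) auto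
  also have "\<dots> = B ^ Suc N" by (simp only: power_Suc)
  finally show ?case .
qed

lemma digits_inj:
  fixes f g :: "nat \<Rightarrow> nat"
  assumes "B > 0" "\<forall>i<N. f i < B" "\<forall>i<N. g i < B"
    and "(\<Sum>i<N. f i * B ^ i) = (\<Sum>i<N. g i * B ^ i)"
  shows "\<forall>i<N. f i = g i"
  using assms(2-4)
proof (induction N)
  case 0 then show ?case by simp
next
  case (Suc N)
  define F where "F = (\<Sum>i<N. f i * B ^ i)"
  define G where "G = (\<Sum>i<N. g i * B ^ i)"
  have bF: "F < B ^ N" unfolding F_def using digits_bound[OF assms(1), of N f] Suc.prems by simp
  have bG: "G < B ^ N" unfolding G_def using digits_bound[OF assms(1), of N g] Suc.prems by simp
  have eq: "F + f N * B ^ N = G + g N * B ^ N" using Suc.prems(3) by (simp only: F_def G_def sum.lessThan_Suc)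
  have pos: "B ^ N \<noteq> 0" using assms(1) by simp
  have d1: "(F + f N * B ^ N) div B ^ N = f N"
  proof -
    have "(F + f N * B ^ N) div B ^ N = f N + F div B ^ N" using div_mult_self1[OF pos, of F "f N"] .
    then show ?thesis using div_less[OF bF] by simp
  qed
  have d2: "(G + g N * B ^ N) div B ^ N = g N"
  proof -
    have "(G + g N * B ^ N) div B ^ N = g N + G div B ^ N" using div_mult_self1[OF pos, of G "g N"] .
    then show ?thesis using div_less[OF bG] by simp
  qed
  have fN: "f N = g N" using d1 d2 eq by simp
  have FG: "F = G" using eq unfolding fN by (rule add_right_imp_eq)
  have rest: "\<forall>i<N. f i = g i"
    by (rule Suc.IH) (use Suc.prems FG in \<open>auto simp: F_def G_def\<close>)
  show ?case
  proof (intro allI impI)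
    fix i assume "i < Suc N"
    then show "f i = g i" using fN rest by (cases "i = N") auto
  qed
qed

lemma mpoly_eval_zero:
  fixes p :: "'a::field mpoly"
  assumes inf: "infinite (UNIV::'a set)" and ev: "\<And>x. mpeval x p = 0"
  shows "p = 0"
proof (rule ccontr)
  assume p0: "p \<noteq> 0"
  define V where "V = \<Union> (Poly_Mapping.keys ` Poly_Mapping.keys p)"
  have "finite V" unfolding V_def by simp
  then obtain N where N: "V \<subseteq> {..<N}" using finite_nat_bounded by blast
  define B where "B = Suc (\<Sum>m\<in>Poly_Mapping.keys p. \<Sum>i\<in>Poly_Mapping.keys m. Poly_Mapping.lookup m i)"
  have Bpos: "B > 0" by (simp add: B_def)
  have Bbig: "Poly_Mapping.lookup m i < B" if "m \<in> Poly_Mapping.keys p" for m i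
  proof (cases "i \<in> Poly_Mapping.keys m")
    case True
    have "Poly_Mapping.lookup m i \<le> (\<Sum>i\<in>Poly_Mapping.keys m. Poly_Mapping.lookup m i)"
      using True by (intro member_le_sum) auto
    also have "\<dots> \<le> (\<Sum>m\<in>Poly_Mapping.keys p. \<Sum>i\<in>Poly_Mapping.keys m. Poly_Mapping.lookup m i)"
      using that by (intro member_le_sum) auto
    finally show ?thesis by (simp add: B_def)
  next
    case False then show ?thesis by (simp add: in_keys_iff Bpos)
  qed
  have keysN: "Poly_Mapping.keys m \<subseteq> {..<N}" if "m \<in> Poly_Mapping.keys p" for m
    using N that unfolding V_def by auto
  define enc where "enc m = (\<Sum>i<N. Poly_Mapping.lookup m i * B ^ i)" for m
  have inj: "inj_on enc (Poly_Mapping.keys p)"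
  proof (rule inj_onI)
    fix m m' assume m: "m \<in> Poly_Mapping.keys p" and m': "m' \<in> Poly_Mapping.keys p" and e: "enc m = enc m'"
    have "\<forall>i<N. Poly_Mapping.lookup m i = Poly_Mapping.lookup m' i"
      by (rule digits_inj[OF Bpos]) (use Bbig m m' e in \<open>auto simp: enc_def\<close>)
    moreover have "Poly_Mapping.lookup m i = 0" "Poly_Mapping.lookup m' i = 0" if "\<not> i < N" for i
      using keysN[OF m] keysN[OF m'] that by (auto simp: in_keys_iff)
    ultimately show "m = m'" by (intro poly_mapping_eqI) (metis)
  qed
  define P where "P = (\<Sum>m\<in>Poly_Mapping.keys p. monom (Poly_Mapping.lookup p m) (enc m))"
  have evP: "poly P t = 0" for t
  proof -
    have mv: "monv (\<lambda>i. t ^ (B ^ i)) m = t ^ enc m" if "m \<in> Poly_Mapping.keys p" for m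
    proof -
      have "monv (\<lambda>i. t ^ (B ^ i)) m = (\<Prod>i<N. (t ^ (B ^ i)) ^ Poly_Mapping.lookup m i)"
        by (rule monv_superset) (use keysN[OF that] in auto)
      also have "\<dots> = (\<Prod>i<N. t ^ (Poly_Mapping.lookup m i * B ^ i))"
        by (simp add: power_mult[symmetric] mult.commute)
      also have "\<dots> = t ^ enc m" by (simp add: enc_def power_sum)
      finally show ?thesis .
    qed
    have "poly P t = (\<Sum>m\<in>Poly_Mapping.keys p. Poly_Mapping.lookup p m * t ^ enc m)"
      by (simp add: P_def poly_sum poly_monom)
    also have "\<dots> = mpeval (\<lambda>i. t ^ (B ^ i)) p"
      by (simp add: mpeval_monv mv)
    finally show ?thesis using ev by simp
  qed
  obtain m0 where m0: "m0 \<in> Poly_Mapping.keys p" using p0 keys_eq_empty by blast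
  have "coeff P (enc m0) = (\<Sum>m\<in>Poly_Mapping.keys p. if m = m0 then Poly_Mapping.lookup p m else 0)"
    unfolding P_def coeff_sum coeff_monom
    by (rule sum.cong) (use inj m0 in \<open>auto dest: inj_onD\<close>)
  also have "\<dots> = Poly_Mapping.lookup p m0" using m0 by simp
  finally have "coeff P (enc m0) \<noteq> 0" using m0 by (simp add: in_keys_iff)
  then have "P \<noteq> 0" by auto
  then have "finite {t. poly P t = 0}" by (rule poly_roots_finite)
  with evP inf show False by simp
qed

lemma mpoly_eqI_eval:
  fixes p q :: "'a::field mpoly"
  assumes inf: "infinite (UNIV::'a set)" and ev: "\<And>x. mpeval x p = mpeval x q"
  shows "p = q"
  using mpoly_eval_zero[OF inf, of "p - q"] ev by simp

lemma alg_closed_infinite: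
  assumes "alg_closed_field_type TYPE('a::field)"
  shows "infinite (UNIV::'a set)"
proof
  assume fin: "finite (UNIV::'a set)"
  define Q where "Q = (\<Prod>a\<in>(UNIV::'a set). [:-a, 1:])"
  have "degree Q = (\<Sum>a\<in>(UNIV::'a set). degree [:-a, 1:])"
    unfolding Q_def by (rule degree_prod_eq_sum_degree) auto
  also have "\<dots> = card (UNIV::'a set)" by simp
  finally have dQ: "degree Q = card (UNIV::'a set)" .
  have "card (UNIV::'a set) > 0" using fin by (simp add: card_gt_0_iff)
  then have "degree (Q + 1) = degree Q" using dQ by (intro degree_add_eq_left) simp
  then have "degree (Q + 1) \<ge> 1" using dQ \<open>card _ > 0\<close> by simp
  then obtain x where "poly (Q + 1) x = 0"
    using assms unfolding alg_closed_field_type_def by blast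
  moreover have "poly Q x = 0"
    unfolding Q_def poly_prod using fin by (intro prod_zero bexI[of _ x]) auto
  ultimately show False by simp
qed

lemma alg_closed_root:
  assumes "alg_closed_field_type TYPE('a::field)" "k \<ge> 1"
  shows "\<exists>y::'a. y ^ k = a"
proof -
  define P where "P = monom (1::'a) k + [:-a:]"
  have "degree P = k" unfolding P_def using assms(2)
    by (subst degree_add_eq_left) (auto simp: degree_monom_eq)
  then obtain y where "poly P y = 0"
    using assms unfolding alg_closed_field_type_def by auto
  then show ?thesis by (auto simp: P_def poly_monom)
qed

lemma vandermonde_gen:
  fixes v :: "nat \<Rightarrow> 'a::field"
  assumes inf: "infinite (UNIV::'a set)" and "finite A" "inj_on e A"
    and z: "\<And>c. c \<noteq> 0 \<Longrightarrow> (\<Sum>k\<in>A. c ^ e k * v k) = 0"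
  shows "\<forall>k\<in>A. v k = 0"
proof (rule ccontr)
  assume "\<not> (\<forall>k\<in>A. v k = 0)"
  then obtain k0 where k0: "k0 \<in> A" "v k0 \<noteq> 0" by auto
  define P where "P = (\<Sum>k\<in>A. monom (v k) (e k))"
  have "coeff P (e k0) = (\<Sum>k\<in>A. if k = k0 then v k else 0)"
    unfolding P_def coeff_sum coeff_monom
    by (rule sum.cong) (use assms k0 in \<open>auto dest: inj_onD\<close>)
  also have "\<dots> = v k0" using k0 assms by simp
  finally have "P \<noteq> 0" using k0 by auto
  then have "finite {t. poly P t = 0}" by (rule poly_roots_finite)
  moreover have "UNIV - {0} \<subseteq> {t. poly P t = 0}"
    using z by (auto simp: P_def poly_sum poly_monom mult.commute)
  ultimately have "finite (UNIV - {0::'a})" by (meson finite_subset)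
  then show False using inf by simp
qed

definition Dsc :: "(nat \<Rightarrow> 'a::comm_semiring_1) \<Rightarrow> 'a mpoly \<Rightarrow> 'a mpoly" where
  "Dsc \<alpha> Q = Poly_Mapping.mapp (\<lambda>m v. monv \<alpha> m * v) Q"

lemma lookup_Dsc: "Poly_Mapping.lookup (Dsc \<alpha> Q) m = monv \<alpha> m * Poly_Mapping.lookup Q m"
  by (simp add: Dsc_def lookup_mapp when_def in_keys_iff)

lemma monv_mult: "monv (\<lambda>i. \<alpha> i * x i) m = monv \<alpha> m * monv x m"
  by (simp add: monv_def power_mult_distrib prod.distrib)

lemma mpeval_Dsc: "mpeval x (Dsc \<alpha> Q) = mpeval (\<lambda>i. \<alpha> i * x i) Q"
proof -
  have "mpeval x (Dsc \<alpha> Q) = (\<Sum>m\<in>Poly_Mapping.keys Q. Poly_Mapping.lookup (Dsc \<alpha> Q) m * monv x m)"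
    by (rule mpeval_superset) (auto simp: Dsc_def intro: set_mp[OF keys_mapp_subset])
  then show ?thesis by (simp add: lookup_Dsc mpeval_monv monv_mult mult_ac)
qed

lemma coeff_scale:
  fixes P Q :: "'a::field mpoly"
  assumes inf: "infinite (UNIV::'a set)"
    and ev: "\<And>x. mpeval x P = K * mpeval (\<lambda>i. \<alpha> i * x i) Q"
  shows "Poly_Mapping.lookup P m = K * monv \<alpha> m * Poly_Mapping.lookup Q m"
proof -
  have "P = Const K * Dsc \<alpha> Q"
    by (rule mpoly_eqI_eval[OF inf]) (simp add: ev mpeval_Dsc)
  then show ?thesis by (simp add: lookup_Dsc)
qed


definition scl :: "nat \<Rightarrow> 'a::field \<Rightarrow> (nat \<Rightarrow> 'a) \<Rightarrow> (nat \<Rightarrow> 'a)" where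
  "scl n c \<phi> = (\<lambda>i. c ^ wt n i * \<phi> i)"

lemma mon2: "mon [a, b] = Poly_Mapping.single 0 a + Poly_Mapping.single 1 b"
  by (simp add: mon_def lessThan_Suc add_ac)

lemma mon3: "mon [a, b, e] = Poly_Mapping.single 0 a + Poly_Mapping.single 1 b + Poly_Mapping.single 2 e"
  by (simp add: mon_def lessThan_Suc add_ac numeral_2_eq_2)

lemma monv_mon2: "monv x (mon [a, b]) = x 0 ^ a * x 1 ^ b"
  by (simp add: mon2 monv_add)

lemma monv_mon3: "monv x (mon [a, b, e]) = x 0 ^ a * x 1 ^ b * x 2 ^ e"
  by (simp add: mon3 monv_add)

definition W1 :: "(nat \<Rightarrow> 'a::field) \<Rightarrow> 'a \<Rightarrow> 'a \<Rightarrow> 'a" where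
 "W1 \<phi> X Y = Y ^ 2 + \<phi> 0 * X * Y + \<phi> 2 * Y - X ^ 3 - \<phi> 1 * X ^ 2 - \<phi> 3 * X - \<phi> 4"

lemma mpeval_weq1: "mpeval y (weq1 \<phi>) = W1 \<phi> (y 0) (y 1)"
  by (simp add: weq1_def W1_def)

lemma W1_scale: "(c::'a::field) \<noteq> 0 \<Longrightarrow> W1 (scl 1 c \<phi>) X Y = c^6 * W1 \<phi> (X / c^2) (Y / c^3)"
  unfolding W1_def scl_def wt_def by (simp add: power_divide algebra_simps) (simp add: field_simps eval_nat_numeral)


lemma act1_core:
  fixes \<phi> :: "nat \<Rightarrow> 'a::field"
  assumes inf: "infinite (UNIV::'a set)" and u: "cs ! 0 \<noteq> 0" and c: "c \<noteq> 0"
    and h0: "cs' ! 0 = 1" and h1: "cs' ! 1 = cs ! 1 / c ^ 2" and h2: "cs' ! 2 = cs ! 2 / c"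
    and h3: "cs' ! 3 = cs ! 3 / c ^ 3"
  shows "act1 (cs, A, B) (scl 1 c \<phi>) = scl 1 (c / cs ! 0) (act1 (cs', A', B') \<phi>)"
proof -
  define u where "u = cs ! 0"
  define r where "r = cs ! 1"
  define s where "s = cs ! 2"
  define t where "t = cs ! 3"
  define \<sigma> :: "nat \<Rightarrow> 'a mpoly" where "\<sigma> = (\<lambda>i. if i = 0 then Const ((cs!0)^2) * Var 0 + Const (cs!1)
                  else if i = 1 then Const ((cs!0)^3) * Var 1 + Const ((cs!0)^2 * (cs!2)) * Var 0 + Const (cs!3)
                  else Var i)"
  define \<sigma>' :: "nat \<Rightarrow> 'a mpoly" where "\<sigma>' = (\<lambda>i. if i = 0 then Const ((cs'!0)^2) * Var 0 + Const (cs'!1)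
                  else if i = 1 then Const ((cs'!0)^3) * Var 1 + Const ((cs'!0)^2 * (cs'!2)) * Var 0 + Const (cs'!3)
                  else Var i)"
  define P where "P = Const (inverse ((cs!0) ^ 6)) * msubst \<sigma> (weq1 (scl 1 c \<phi>))"
  define P' where "P' = Const (inverse ((cs'!0) ^ 6)) * msubst \<sigma>' (weq1 \<phi>)"
  define \<alpha> :: "nat \<Rightarrow> 'a" where "\<alpha> = (\<lambda>i. if i = 0 then (u/c)^2 else if i = 1 then (u/c)^3 else 1)"
  have u0: "u \<noteq> 0" using u by (simp add: u_def)
  have h1': "cs' ! Suc 0 = cs ! 1 / c ^ 2" using h1 by simp
  have ev: "mpeval x P = (c/u)^6 * mpeval (\<lambda>i. \<alpha> i * x i) P'" for x
  proof -
    have "mpeval x P = inverse (u^6) * W1 (scl 1 c \<phi>) (u^2 * x 0 + r) (u^3 * x 1 + u^2 * s * x 0 + t)"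
      by (simp add: P_def mpeval_msubst mpeval_weq1 \<sigma>_def u_def r_def s_def t_def)
    also have "\<dots> = inverse (u^6) * c^6 * W1 \<phi> ((u^2 * x 0 + r) / c^2) ((u^3 * x 1 + u^2 * s * x 0 + t) / c^3)"
      by (subst W1_scale[OF c]) (simp only: mult.assoc)
    also have "(u^2 * x 0 + r) / c^2 = (u/c)^2 * x 0 + r / c^2"
      using c by (simp add: field_simps power_divide)
    also have "(u^3 * x 1 + u^2 * s * x 0 + t) / c^3 = (u/c)^3 * x 1 + s / c * ((u/c)^2 * x 0) + t / c^3"
      using c by (simp add: field_simps power_divide eval_nat_numeral)
    also have "inverse (u^6) * c^6 = (c/u)^6"
      by (simp add: power_divide field_simps)
    also have "W1 \<phi> ((u/c)^2 * x 0 + r / c^2) ((u/c)^3 * x 1 + s / c * ((u/c)^2 * x 0) + t / c^3)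
        = mpeval (\<lambda>i. \<alpha> i * x i) P'"
      by (simp add: P'_def mpeval_msubst mpeval_weq1 \<sigma>'_def \<alpha>_def h0 h1 h1' h2 h3 r_def s_def t_def)
    finally show ?thesis .
  qed
  have L: "Poly_Mapping.lookup P m = (c/u)^6 * monv \<alpha> m * Poly_Mapping.lookup P' m" for m
    by (rule coeff_scale[OF inf ev])
  have E1: "act1 (cs, A, B) (scl 1 c \<phi>) = (\<lambda>i. if i = 0 then Poly_Mapping.lookup P (mon [1,1])
             else if i = 1 then - Poly_Mapping.lookup P (mon [2,0])
             else if i = 2 then Poly_Mapping.lookup P (mon [0,1])
             else if i = 3 then - Poly_Mapping.lookup P (mon [1,0])
             else if i = 4 then - Poly_Mapping.lookup P (mon [0,0])
             else 0)"
    unfolding act1_def Let_def P_def \<sigma>_def prod.case by (rule refl)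
  have E2: "act1 (cs', A', B') \<phi> = (\<lambda>i. if i = 0 then Poly_Mapping.lookup P' (mon [1,1])
             else if i = 1 then - Poly_Mapping.lookup P' (mon [2,0])
             else if i = 2 then Poly_Mapping.lookup P' (mon [0,1])
             else if i = 3 then - Poly_Mapping.lookup P' (mon [1,0])
             else if i = 4 then - Poly_Mapping.lookup P' (mon [0,0])
             else 0)"
    unfolding act1_def Let_def P'_def \<sigma>'_def prod.case by (rule refl)
  have cu: "c / cs ! 0 = c / u" by (simp add: u_def)
  show ?thesis
    unfolding E1 E2 cu
  proof (rule ext)
    fix i :: nat
    have a: "(c/u)^6 * ((u/c)^2 * (u/c)^3) = c/u" and b: "(c/u)^6 * ((u/c)^2)^2 = (c/u)^2"
      and d: "(c/u)^6 * ((u/c)^3) = (c/u)^3" and e: "(c/u)^6 * ((u/c)^2) = (c/u)^4"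
      using u0 c by (simp_all add: field_simps eval_nat_numeral)
    show "(if i = 0 then Poly_Mapping.lookup P (mon [1,1])
             else if i = 1 then - Poly_Mapping.lookup P (mon [2,0])
             else if i = 2 then Poly_Mapping.lookup P (mon [0,1])
             else if i = 3 then - Poly_Mapping.lookup P (mon [1,0])
             else if i = 4 then - Poly_Mapping.lookup P (mon [0,0])
             else 0) = scl 1 (c / u) (\<lambda>i. if i = 0 then Poly_Mapping.lookup P' (mon [1,1])
             else if i = 1 then - Poly_Mapping.lookup P' (mon [2,0])
             else if i = 2 then Poly_Mapping.lookup P' (mon [0,1])
             else if i = 3 then - Poly_Mapping.lookup P' (mon [1,0])
             else if i = 4 then - Poly_Mapping.lookup P' (mon [0,0])
             else 0) i"
      unfolding scl_def L monv_mon2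
      using a b d e by (simp add: \<alpha>_def wt_def mult.assoc[symmetric])
  qed
qed


definition W2 :: "(nat \<Rightarrow> 'a::field) \<Rightarrow> 'a \<Rightarrow> 'a \<Rightarrow> 'a \<Rightarrow> 'a" where
 "W2 \<phi> X Z Y = Y ^ 2 + (\<phi> 0 * X^2 + \<phi> 1 * X * Z + \<phi> 2 * Z^2) * Y
     - (\<phi> 3 * X^4 + \<phi> 4 * X^3 * Z + \<phi> 5 * X^2 * Z^2 + \<phi> 6 * X * Z^3 + \<phi> 7 * Z^4)"

lemma mpeval_weq2: "mpeval y (weq2 \<phi>) = W2 \<phi> (y 0) (y 1) (y 2)"
  by (simp add: weq2_def W2_def lessThan_Suc monv_mon2 eval_nat_numeral algebra_simps)

lemma W2_scaleY: "(c::'a::field) \<noteq> 0 \<Longrightarrow> W2 (scl 2 c \<phi>) X Z Y = c^2 * W2 \<phi> X Z (Y / c)"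
  unfolding W2_def scl_def wt_def by (simp add: power_divide algebra_simps) (simp add: field_simps eval_nat_numeral)

lemma W2_hom: "(l::'a::field) \<noteq> 0 \<Longrightarrow> W2 \<phi> (l * X) (l * Z) Y = l^4 * W2 \<phi> X Z (Y / l^2)"
  unfolding W2_def by (simp add: power_divide algebra_simps) (simp add: field_simps eval_nat_numeral)

lemma act2_core:
  fixes \<phi> :: "nat \<Rightarrow> 'a::field"
  assumes inf: "infinite (UNIV::'a set)" and mu: "cs ! 0 \<noteq> 0" and c: "c \<noteq> 0" and l: "l \<noteq> 0"
    and BB: "\<And>i j. i < 2 \<Longrightarrow> j < 2 \<Longrightarrow> B $$ (i, j) = l * B' $$ (i, j)"
    and h0: "cs' ! 0 = 1" and h1: "cs' ! 1 = cs ! 1 / (c * l^2)" and h2: "cs' ! 2 = cs ! 2 / (c * l^2)"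
    and h3: "cs' ! 3 = cs ! 3 / (c * l^2)"
  shows "act2 (cs, A, B) (scl 2 c \<phi>) = scl 2 (c * cs ! 0 * l^2) (act2 (cs', A', B') \<phi>)"
proof -
  define \<mu> where "\<mu> = cs ! 0"
  define \<sigma> :: "nat \<Rightarrow> 'a mpoly" where "\<sigma> = (\<lambda>i. if i = 0 then Const (B $$ (0,0)) * Var 0 + Const (B $$ (1,0)) * Var 1
                  else if i = 1 then Const (B $$ (0,1)) * Var 0 + Const (B $$ (1,1)) * Var 1
                  else if i = 2 then Const (inverse (cs!0)) * Var 2 + Const (cs ! 1) * Var 0 ^ 2
                        + Const (cs ! 2) * Var 0 * Var 1 + Const (cs ! 3) * Var 1 ^ 2
                  else Var i)"
  define \<sigma>' :: "nat \<Rightarrow> 'a mpoly" where "\<sigma>' = (\<lambda>i. if i = 0 then Const (B' $$ (0,0)) * Var 0 + Const (B' $$ (1,0)) * Var 1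
                  else if i = 1 then Const (B' $$ (0,1)) * Var 0 + Const (B' $$ (1,1)) * Var 1
                  else if i = 2 then Const (inverse (cs'!0)) * Var 2 + Const (cs' ! 1) * Var 0 ^ 2
                        + Const (cs' ! 2) * Var 0 * Var 1 + Const (cs' ! 3) * Var 1 ^ 2
                  else Var i)"
  define P where "P = Const ((cs!0) ^ 2) * msubst \<sigma> (weq2 (scl 2 c \<phi>))"
  define P' where "P' = Const ((cs'!0) ^ 2) * msubst \<sigma>' (weq2 \<phi>)"
  define e where "e = c * \<mu> * l^2"
  define \<alpha> :: "nat \<Rightarrow> 'a" where "\<alpha> = (\<lambda>i. if i = 2 then inverse e else 1)"
  have mu0: "\<mu> \<noteq> 0" using mu by (simp add: \<mu>_def)
  have e0: "e \<noteq> 0" using mu0 c l by (simp add: e_def)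
  have h1': "cs' ! Suc 0 = cs ! 1 / (c * l^2)" using h1 by simp
  have ev: "mpeval x P = e^2 * mpeval (\<lambda>i. \<alpha> i * x i) P'" for x
  proof -
    define X where "X = B' $$ (0,0) * x 0 + B' $$ (1,0) * x 1"
    define Z where "Z = B' $$ (0,1) * x 0 + B' $$ (1,1) * x 1"
    define R where "R = cs ! 1 * x 0 ^ 2 + cs ! 2 * x 0 * x 1 + cs ! 3 * x 1 ^ 2"
    have "mpeval x P = \<mu>^2 * W2 (scl 2 c \<phi>) (l * X) (l * Z) (inverse \<mu> * x 2 + R)"
      by (simp add: P_def mpeval_msubst mpeval_weq2 \<sigma>_def \<mu>_def X_def Z_def R_def BB algebra_simps)
    also have "\<dots> = \<mu>^2 * (l^4 * (c^2 * W2 \<phi> X Z ((inverse \<mu> * x 2 + R) / l^2 / c)))"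
      by (simp only: W2_scaleY[OF c] W2_hom[OF l])
    also have "(inverse \<mu> * x 2 + R) / l^2 / c = inverse e * x 2 + R / (c * l^2)"
      using mu0 c l by (simp add: e_def field_simps)
    also have "\<mu>^2 * (l^4 * (c^2 * W2 \<phi> X Z (inverse e * x 2 + R / (c * l^2)))) = e^2 * W2 \<phi> X Z (inverse e * x 2 + R / (c * l^2))"
      by (simp add: e_def power_mult_distrib eval_nat_numeral)
    also have "W2 \<phi> X Z (inverse e * x 2 + R / (c * l^2)) = mpeval (\<lambda>i. \<alpha> i * x i) P'"
      by (simp add: P'_def mpeval_msubst mpeval_weq2 \<sigma>'_def \<alpha>_def h0 h1 h1' h2 h3 X_def Z_def R_def
           add_divide_distrib add.assoc)
    finally show ?thesis .
  qed
  have L: "Poly_Mapping.lookup P m = e^2 * monv \<alpha> m * Poly_Mapping.lookup P' m" for m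
    by (rule coeff_scale[OF inf ev])
  have E1: "act2 (cs, A, B) (scl 2 c \<phi>) = (\<lambda>i. if i < 3 then Poly_Mapping.lookup P (mon [2 - i, i, 1])
             else if i < 8 then - Poly_Mapping.lookup P (mon [4 - (i - 3), i - 3, 0])
             else 0)"
    unfolding act2_def Let_def P_def \<sigma>_def prod.case by (rule refl)
  have E2: "act2 (cs', A', B') \<phi> = (\<lambda>i. if i < 3 then Poly_Mapping.lookup P' (mon [2 - i, i, 1])
             else if i < 8 then - Poly_Mapping.lookup P' (mon [4 - (i - 3), i - 3, 0])
             else 0)"
    unfolding act2_def Let_def P'_def \<sigma>'_def prod.case by (rule refl)
  have ee: "c * cs ! 0 * l^2 = e" by (simp add: e_def \<mu>_def)
  show ?thesis
    unfolding E1 E2 ee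
  proof (rule ext)
    fix i :: nat
    have a: "e^2 * inverse e = e" using e0 by (simp add: eval_nat_numeral)
    show "(if i < 3 then Poly_Mapping.lookup P (mon [2 - i, i, 1])
             else if i < 8 then - Poly_Mapping.lookup P (mon [4 - (i - 3), i - 3, 0])
             else 0) = scl 2 e (\<lambda>i. if i < 3 then Poly_Mapping.lookup P' (mon [2 - i, i, 1])
             else if i < 8 then - Poly_Mapping.lookup P' (mon [4 - (i - 3), i - 3, 0])
             else 0) i"
      unfolding scl_def L monv_mon3
      using a by (simp add: \<alpha>_def wt_def)
  qed
qed


definition tdeg :: "(nat \<Rightarrow>\<^sub>0 nat) \<Rightarrow> nat" where
  "tdeg m = (\<Sum>i\<in>Poly_Mapping.keys m. Poly_Mapping.lookup m i)"

lemma tdeg_superset: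
  assumes "finite S" "Poly_Mapping.keys m \<subseteq> S"
  shows "tdeg m = (\<Sum>i\<in>S. Poly_Mapping.lookup m i)"
  unfolding tdeg_def
  by (rule sum.mono_neutral_left) (use assms in \<open>auto simp: in_keys_iff\<close>)

lemma tdeg_add: "tdeg (m + m') = tdeg m + tdeg m'"
proof -
  let ?S = "Poly_Mapping.keys m \<union> Poly_Mapping.keys m'"
  have "tdeg (m + m') = (\<Sum>i\<in>?S. Poly_Mapping.lookup (m + m') i)"
    by (rule tdeg_superset) (auto dest: set_mp[OF keys_add])
  also have "\<dots> = (\<Sum>i\<in>?S. Poly_Mapping.lookup m i) + (\<Sum>i\<in>?S. Poly_Mapping.lookup m' i)"
    by (simp add: lookup_add sum.distrib)
  also have "\<dots> = tdeg m + tdeg m'"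
    by (subst (1 2) tdeg_superset[of ?S]) auto
  finally show ?thesis .
qed

lemma tdeg_single[simp]: "tdeg (Poly_Mapping.single i k) = k"
  by (simp add: tdeg_def)

lemma monv_const_mult: "monv (\<lambda>i. l * y i) m = l ^ tdeg m * monv y m"
proof -
  have "monv (\<lambda>i. l * y i) m = monv (\<lambda>_. l) m * monv y m" by (rule monv_mult)
  moreover have "monv (\<lambda>_. l) m = l ^ tdeg m" by (simp add: monv_def tdeg_def power_sum)
  ultimately show ?thesis by simp
qed

lemma monv_cong: "(\<And>i. i \<in> Poly_Mapping.keys m \<Longrightarrow> y i = y' i) \<Longrightarrow> monv y m = monv y' m"
  unfolding monv_def by (rule prod.cong) auto

lemma mpeval_lin: "mpeval x (linsubst nv B j) = (\<Sum>i<nv. B $$ (i, j) * x i)"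
  by (simp add: linsubst_def mpeval_sum)

lemma lin_scale_eval:
  assumes "j < nv" "\<And>i j. i < nv \<Longrightarrow> j < nv \<Longrightarrow> B $$ (i, j) = l * B' $$ (i, j)"
  shows "mpeval x (linsubst nv B j) = l * mpeval x (linsubst nv B' j)"
  using assms by (simp add: mpeval_lin sum_distrib_left mult.assoc)

lemma monv_lin_scale:
  assumes "Poly_Mapping.keys m \<subseteq> {..<nv}" "\<And>i j. i < nv \<Longrightarrow> j < nv \<Longrightarrow> B $$ (i, j) = l * B' $$ (i, j)"
  shows "monv (\<lambda>j. mpeval x (linsubst nv B j)) m = l ^ tdeg m * monv (\<lambda>j. mpeval x (linsubst nv B' j)) m"
proof -
  have "monv (\<lambda>j. mpeval x (linsubst nv B j)) m = monv (\<lambda>j. l * mpeval x (linsubst nv B' j)) m"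
    by (rule monv_cong) (use assms in \<open>auto intro: lin_scale_eval\<close>)
  then show ?thesis by (simp add: monv_const_mult)
qed

lemma keys_mon3: "Poly_Mapping.keys (mon [a, b, e]) \<subseteq> {..<3}"
  by (auto simp: in_keys_iff mon3 lookup_add lookup_single when_def split: if_splits)

lemma tdeg_mon3: "tdeg (mon [a, b, e]) = a + b + e"
  unfolding mon3 by (simp add: tdeg_add)

lemma mons3_eq: "mons3 = [mon [0,0,3], mon [0,1,2], mon [0,2,1], mon [0,3,0], mon [1,0,2], mon [1,1,1],
   mon [1,2,0], mon [2,0,1], mon [2,1,0], mon [3,0,0]]"
  by (simp add: mons3_def upt_rec eval_nat_numeral)

lemma mons3_props: "t < 10 \<Longrightarrow> Poly_Mapping.keys (mons3 ! t) \<subseteq> {..<3} \<and> tdeg (mons3 ! t) = 3"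
proof -
  assume "t < 10"
  moreover have "length mons3 = 10" by (simp add: mons3_eq)
  ultimately have "mons3 ! t \<in> set mons3" by (metis nth_mem)
  moreover have "\<forall>m\<in>set mons3. Poly_Mapping.keys m \<subseteq> {..<3} \<and> tdeg m = 3"
    unfolding mons3_eq by (simp add: keys_mon3 tdeg_mon3)
  ultimately show ?thesis by blast
qed

lemma mpeval_cubic3: "mpeval y (cubic3 \<phi>) = (\<Sum>t<10. \<phi> t * monv y (mons3 ! t))"
  by (simp add: cubic3_def mpeval_sum)

lemma act3_core:
  fixes \<phi> :: "nat \<Rightarrow> 'a::field"
  assumes inf: "infinite (UNIV::'a set)"
    and BB: "\<And>i j. i < 3 \<Longrightarrow> j < 3 \<Longrightarrow> B $$ (i, j) = l * B' $$ (i, j)"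
    and h0: "cs' ! 0 = 1"
  shows "act3 (cs, A, B) (scl 3 c \<phi>) = scl 3 (c * cs ! 0 * l^3) (act3 (cs', A', B') \<phi>)"
proof -
  define P where "P = Const (cs ! 0) * msubst (linsubst 3 B) (cubic3 (scl 3 c \<phi>))"
  define P' where "P' = Const (cs' ! 0) * msubst (linsubst 3 B') (cubic3 \<phi>)"
  have "P = Const (c * cs ! 0 * l^3) * P'"
  proof (rule mpoly_eqI_eval[OF inf])
    fix x
    have "mpeval x P = cs ! 0 * (\<Sum>t<10. (c * \<phi> t) * monv (\<lambda>j. mpeval x (linsubst 3 B j)) (mons3 ! t))"
      by (simp add: P_def mpeval_msubst mpeval_cubic3 scl_def wt_def)
    also have "\<dots> = cs ! 0 * (\<Sum>t<10. (c * \<phi> t) * (l^3 * monv (\<lambda>j. mpeval x (linsubst 3 B' j)) (mons3 ! t)))"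
      using mons3_props by (intro arg_cong2[where f = "(*)"] sum.cong refl) (metis lessThan_iff monv_lin_scale[OF _ BB])
    also have "\<dots> = mpeval x (Const (c * cs ! 0 * l^3) * P')"
      by (simp add: P'_def h0 mpeval_msubst mpeval_cubic3 sum_distrib_left mult_ac)
    finally show "mpeval x P = mpeval x (Const (c * cs ! 0 * l^3) * P')" .
  qed
  then show ?thesis
    unfolding act3_def Let_def prod.case P_def[symmetric] P'_def[symmetric]
    by (simp add: scl_def wt_def fun_eq_iff)
qed


definition pp2 :: "nat \<Rightarrow> nat \<Rightarrow> (nat \<Rightarrow>\<^sub>0 nat)" where
  "pp2 i j = Poly_Mapping.single i 1 + Poly_Mapping.single j 1"

lemma mons4_eq: "mons4 = [pp2 0 0, pp2 0 1, pp2 0 2, pp2 0 3, pp2 1 1, pp2 1 2, pp2 1 3, pp2 2 2, pp2 2 3, pp2 3 3]"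
  by (simp add: mons4_def pp2_def upt_rec eval_nat_numeral)

lemma keys_pp2: "Poly_Mapping.keys (pp2 i j) \<subseteq> {i, j}"
  by (auto simp: in_keys_iff pp2_def lookup_add lookup_single when_def split: if_splits)

lemma keys_pp2_lt: "i < n \<Longrightarrow> j < n \<Longrightarrow> Poly_Mapping.keys (pp2 i j) \<subseteq> {..<n}"
  using keys_pp2[of i j] by auto

lemma tdeg_pp2: "tdeg (pp2 i j) = 2"
  by (simp add: pp2_def tdeg_add)

lemma mons4_props: "t < 10 \<Longrightarrow> Poly_Mapping.keys (mons4 ! t) \<subseteq> {..<4} \<and> tdeg (mons4 ! t) = 2"
proof -
  assume "t < 10"
  moreover have "length mons4 = 10" by (simp add: mons4_eq)
  ultimately have "mons4 ! t \<in> set mons4" by (metis nth_mem)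
  moreover have "\<forall>m\<in>set mons4. Poly_Mapping.keys m \<subseteq> {..<4} \<and> tdeg m = 2"
    unfolding mons4_eq by (simp add: keys_pp2_lt tdeg_pp2)
  ultimately show ?thesis by blast
qed

lemma mpeval_quad4: "mpeval y (quad4 \<phi> b) = (\<Sum>t<10. \<phi> (10 * b + t) * monv y (mons4 ! t))"
  by (simp add: quad4_def mpeval_sum)

lemma act4_core:
  fixes \<phi> :: "nat \<Rightarrow> 'a::field"
  assumes inf: "infinite (UNIV::'a set)"
    and AA: "\<And>i j. i < 2 \<Longrightarrow> j < 2 \<Longrightarrow> A $$ (i, j) = l * A' $$ (i, j)"
    and BB: "\<And>i j. i < 4 \<Longrightarrow> j < 4 \<Longrightarrow> B $$ (i, j) = v * B' $$ (i, j)"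
  shows "act4 (cs, A, B) (scl 4 c \<phi>) = scl 4 (c * l * v^2) (act4 (cs', A', B') \<phi>)"
proof -
  define Q where "Q a = (\<Sum>b<2. Const (A $$ (a, b)) * msubst (linsubst 4 B) (quad4 (scl 4 c \<phi>) b))" for a
  define Q' where "Q' a = (\<Sum>b<2. Const (A' $$ (a, b)) * msubst (linsubst 4 B') (quad4 \<phi> b))" for a
  have QQ: "Q a = Const (c * l * v^2) * Q' a" if a: "a < 2" for a
  proof (rule mpoly_eqI_eval[OF inf])
    fix x
    have "mpeval x (Q a) = (\<Sum>b<2. A $$ (a, b) * (\<Sum>t<10. (c * \<phi> (10 * b + t)) * monv (\<lambda>j. mpeval x (linsubst 4 B j)) (mons4 ! t)))"
      by (simp add: Q_def mpeval_sum mpeval_msubst mpeval_quad4 scl_def wt_def)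
    also have "\<dots> = (\<Sum>b<2. (l * A' $$ (a, b)) * (\<Sum>t<10. (c * \<phi> (10 * b + t)) * (v^2 * monv (\<lambda>j. mpeval x (linsubst 4 B' j)) (mons4 ! t))))"
    proof (rule sum.cong[OF refl])
      fix b :: nat assume b: "b \<in> {..<2}"
      have m: "monv (\<lambda>j. mpeval x (linsubst 4 B j)) (mons4 ! t) = v^2 * monv (\<lambda>j. mpeval x (linsubst 4 B' j)) (mons4 ! t)"
        if t: "t \<in> {..<10}" for t
      proof -
        have k: "Poly_Mapping.keys (mons4 ! t) \<subseteq> {..<4}" and d: "tdeg (mons4 ! t) = 2"
          using mons4_props t by auto
        show ?thesis using monv_lin_scale[OF k BB] d by simp
      qed
      show "A $$ (a, b) * (\<Sum>t<10. (c * \<phi> (10 * b + t)) * monv (\<lambda>j. mpeval x (linsubst 4 B j)) (mons4 ! t)) =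
        (l * A' $$ (a, b)) * (\<Sum>t<10. (c * \<phi> (10 * b + t)) * (v^2 * monv (\<lambda>j. mpeval x (linsubst 4 B' j)) (mons4 ! t)))"
        using AA[OF a] b m by simp
    qed
    also have "\<dots> = mpeval x (Const (c * l * v^2) * Q' a)"
      by (simp add: Q'_def mpeval_sum mpeval_msubst mpeval_quad4 sum_distrib_left mult_ac)
    finally show "mpeval x (Q a) = mpeval x (Const (c * l * v^2) * Q' a)" .
  qed
  show ?thesis
    unfolding act4_def Let_def prod.case Q_def[symmetric] Q'_def[symmetric]
    by (simp add: scl_def wt_def fun_eq_iff QQ)
qed


lemma pairs5_eq: "pairs5 = [(0,1),(0,2),(0,3),(0,4),(1,2),(1,3),(1,4),(2,3),(2,4),(3,4)]"
  by (simp add: pairs5_def upt_rec eval_nat_numeral)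

lemma pairs5_lt: "p < 10 \<Longrightarrow> fst (pairs5 ! p) < 5 \<and> snd (pairs5 ! p) < 5"
proof -
  assume "p < 10"
  moreover have "length pairs5 = 10" by (simp add: pairs5_eq)
  ultimately have "pairs5 ! p \<in> set pairs5" by (metis nth_mem)
  moreover have "\<forall>q\<in>set pairs5. fst q < 5 \<and> snd q < 5" by (simp add: pairs5_eq)
  ultimately show ?thesis by blast
qed

lemma mpeval_alt5: "mpeval y (alt5 \<psi> i j) = (\<Sum>p<10. \<Sum>l<5.
      (if pairs5 ! p = (i, j) then \<psi> (5 * p + l) * y l
       else if pairs5 ! p = (j, i) then - (\<psi> (5 * p + l) * y l)
       else 0))"
  unfolding alt5_def mpeval_sum by (intro sum.cong refl) simp

lemma alt5_scale:
  assumes "\<And>l. l < 5 \<Longrightarrow> y l = v * y' l"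
  shows "mpeval y (alt5 (scl 5 c \<phi>) k l) = c * v * mpeval y' (alt5 \<phi> k l)"
  unfolding mpeval_alt5 sum_distrib_left
  by (intro sum.cong refl) (simp add: assms scl_def wt_def)

lemma act5_core:
  fixes \<phi> :: "nat \<Rightarrow> 'a::field"
  assumes inf: "infinite (UNIV::'a set)"
    and AA: "\<And>i j. i < 5 \<Longrightarrow> j < 5 \<Longrightarrow> A $$ (i, j) = l * A' $$ (i, j)"
    and BB: "\<And>i j. i < 5 \<Longrightarrow> j < 5 \<Longrightarrow> B $$ (i, j) = v * B' $$ (i, j)"
  shows "act5 (cs, A, B) (scl 5 c \<phi>) = scl 5 (c * l^2 * v) (act5 (cs', A', B') \<phi>)"
proof -
  define R where "R i j = msubst (linsubst 5 B) (\<Sum>k<5. \<Sum>l<5. Const (A $$ (i, k) * A $$ (j, l)) * alt5 (scl 5 c \<phi>) k l)" for i j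
  define R' where "R' i j = msubst (linsubst 5 B') (\<Sum>k<5. \<Sum>l<5. Const (A' $$ (i, k) * A' $$ (j, l)) * alt5 \<phi> k l)" for i j
  have RR: "R i j = Const (c * l^2 * v) * R' i j" if ij: "i < 5" "j < 5" for i j
  proof (rule mpoly_eqI_eval[OF inf])
    fix x
    have Ly: "\<And>q. q < 5 \<Longrightarrow> mpeval x (linsubst 5 B q) = v * mpeval x (linsubst 5 B' q)"
      by (rule lin_scale_eval) (use BB in auto)
    have "mpeval x (R i j) = (\<Sum>k<5. \<Sum>q<5. (A $$ (i, k) * A $$ (j, q)) * mpeval (\<lambda>q. mpeval x (linsubst 5 B q)) (alt5 (scl 5 c \<phi>) k q))"
      by (simp add: R_def mpeval_msubst mpeval_sum)
    also have "\<dots> = (\<Sum>k<5. \<Sum>q<5. (l^2 * (A' $$ (i, k) * A' $$ (j, q))) * (c * v * mpeval (\<lambda>q. mpeval x (linsubst 5 B' q)) (alt5 \<phi> k q)))"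
      by (intro sum.cong refl) (simp add: AA ij alt5_scale[OF Ly] power2_eq_square mult_ac)
    also have "\<dots> = mpeval x (Const (c * l^2 * v) * R' i j)"
      by (simp add: R'_def mpeval_msubst mpeval_sum sum_distrib_left mult_ac)
    finally show "mpeval x (R i j) = mpeval x (Const (c * l^2 * v) * R' i j)" .
  qed
  have RR2: "t < 50 \<Longrightarrow> R (fst (pairs5 ! (t div 5))) (snd (pairs5 ! (t div 5)))
     = Const (c * l^2 * v) * R' (fst (pairs5 ! (t div 5))) (snd (pairs5 ! (t div 5)))" for t
    using pairs5_lt[of "t div 5"] by (intro RR) auto
  show ?thesis
    unfolding act5_def Let_def prod.case R_def[symmetric] R'_def[symmetric]
    by (simp add: scl_def wt_def fun_eq_iff RR2)
qed


lemma scl_one[simp]: "scl n 1 \<phi> = \<phi>"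
  by (simp add: scl_def)

lemma smult_entries:
  assumes "B \<in> carrier_mat k k" "(l::'a::field) \<noteq> 0"
  shows "\<And>i j. i < k \<Longrightarrow> j < k \<Longrightarrow> B $$ (i, j) = l * ((1 / l) \<cdot>\<^sub>m B) $$ (i, j)"
  using assms by auto

lemma det_smult_root:
  assumes "B \<in> carrier_mat k k" "(l::'a::field) ^ k = det B" "l \<noteq> 0"
  shows "det ((1 / l) \<cdot>\<^sub>m B) = 1"
proof -
  have "det B \<noteq> 0" using assms(2,3) by (metis power_not_zero)
  then show ?thesis using assms by (simp add: power_divide)
qed

lemma decomp1:
  fixes g :: "'a::field gelt"
  assumes inf: "infinite (UNIV::'a set)" and g: "g \<in> Gcal 1"
  shows "\<exists>h\<in>Gcomm 1. \<exists>e. e ^ wfac 1 = gdet 1 g \<and> (\<forall>\<phi>. act 1 g \<phi> = scl 1 e (act 1 h \<phi>))"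
proof -
  obtain cs A B where gg: "g = (cs, A, B)" and len: "length cs = 4" and u: "cs ! 0 \<noteq> 0"
    and AB: "A = zero_mat 0 0" "B = zero_mat 0 0"
    using g by (auto simp: Gcal_def)
  define h where "h = ([1, cs ! 1, cs ! 2, cs ! 3], A, B)"
  have "h \<in> Gcomm 1" using AB by (simp add: h_def Gcomm_def Gcal_def)
  moreover have "act 1 g \<phi> = scl 1 (1 / cs ! 0) (act 1 h \<phi>)" for \<phi>
    using act1_core[OF inf u one_neq_zero, of "[1, cs ! 1, cs ! 2, cs ! 3]" A B \<phi> A B]
    by (simp add: gg h_def act_def)
  moreover have "(1 / cs ! 0) ^ wfac 1 = gdet 1 g"
    by (simp add: gg gdet_def wfac_def field_simps)
  ultimately show ?thesis by blast
qed

lemma decomp2: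
  fixes g :: "'a::field gelt"
  assumes inf: "infinite (UNIV::'a set)" and ac: "alg_closed_field_type TYPE('a)" and g: "g \<in> Gcal 2"
  shows "\<exists>h\<in>Gcomm 2. \<exists>e. e ^ wfac 2 = gdet 2 g \<and> (\<forall>\<phi>. act 2 g \<phi> = scl 2 e (act 2 h \<phi>))"
proof -
  obtain cs A B where gg: "g = (cs, A, B)" and len: "length cs = 4" and u: "cs ! 0 \<noteq> 0"
    and AB: "A = zero_mat 0 0" "B \<in> carrier_mat 2 2" "det B \<noteq> 0"
    using g by (auto simp: Gcal_def)
  obtain l where l: "l ^ 2 = det B" using alg_closed_root[OF ac, of 2] by auto
  have l0: "l \<noteq> 0" using l AB by auto
  define B' where "B' = (1 / l) \<cdot>\<^sub>m B"
  define h where "h = ([1, cs ! 1 / (1 * l^2), cs ! 2 / (1 * l^2), cs ! 3 / (1 * l^2)], A, B')"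
  have dB': "det B' = 1" unfolding B'_def by (rule det_smult_root[OF AB(2) l l0])
  have "h \<in> Gcomm 2" using AB dB' by (simp add: h_def Gcomm_def Gcal_def B'_def)
  moreover have "act 2 g \<phi> = scl 2 (1 * cs ! 0 * l^2) (act 2 h \<phi>)" for \<phi>
    using act2_core[OF inf u one_neq_zero l0 smult_entries[OF AB(2) l0], of "[1, cs ! 1 / (1 * l^2), cs ! 2 / (1 * l^2), cs ! 3 / (1 * l^2)]" A \<phi> A]
    by (simp add: gg h_def act_def B'_def)
  moreover have "(1 * cs ! 0 * l^2) ^ wfac 2 = gdet 2 g"
    by (simp add: gg gdet_def wfac_def l)
  ultimately show ?thesis by blast
qed

lemma decomp3:
  fixes g :: "'a::field gelt"
  assumes inf: "infinite (UNIV::'a set)" and ac: "alg_closed_field_type TYPE('a)" and g: "g \<in> Gcal 3"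
  shows "\<exists>h\<in>Gcomm 3. \<exists>e. e ^ wfac 3 = gdet 3 g \<and> (\<forall>\<phi>. act 3 g \<phi> = scl 3 e (act 3 h \<phi>))"
proof -
  obtain cs A B where gg: "g = (cs, A, B)" and len: "length cs = 1" and u: "cs ! 0 \<noteq> 0"
    and AB: "A = zero_mat 0 0" "B \<in> carrier_mat 3 3" "det B \<noteq> 0"
    using g by (auto simp: Gcal_def)
  obtain l where l: "l ^ 3 = det B" using alg_closed_root[OF ac, of 3] by auto
  have l0: "l \<noteq> 0" using l AB by auto
  define B' where "B' = (1 / l) \<cdot>\<^sub>m B"
  define h where "h = ([1::'a], A, B')"
  have dB': "det B' = 1" unfolding B'_def by (rule det_smult_root[OF AB(2) l l0])
  have "h \<in> Gcomm 3" using AB dB' by (simp add: h_def Gcomm_def Gcal_def B'_def)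
  moreover have "act 3 g \<phi> = scl 3 (1 * cs ! 0 * l^3) (act 3 h \<phi>)" for \<phi>
    using act3_core[OF inf smult_entries[OF AB(2) l0], of "[1]" cs A 1 \<phi> A]
    by (simp add: gg h_def act_def B'_def)
  moreover have "(1 * cs ! 0 * l^3) ^ wfac 3 = gdet 3 g"
    by (simp add: gg gdet_def wfac_def l)
  ultimately show ?thesis by blast
qed

lemma decomp4:
  fixes g :: "'a::field gelt"
  assumes inf: "infinite (UNIV::'a set)" and ac: "alg_closed_field_type TYPE('a)" and g: "g \<in> Gcal 4"
  shows "\<exists>h\<in>Gcomm 4. \<exists>e. e ^ wfac 4 = gdet 4 g \<and> (\<forall>\<phi>. act 4 g \<phi> = scl 4 e (act 4 h \<phi>))"
proof -
  obtain cs A B where gg: "g = (cs, A, B)" and c0: "cs = []"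
    and AB: "A \<in> carrier_mat 2 2" "det A \<noteq> 0" "B \<in> carrier_mat 4 4" "det B \<noteq> 0"
    using g by (auto simp: Gcal_def)
  obtain l where l: "l ^ 2 = det A" using alg_closed_root[OF ac, of 2] by auto
  obtain v where v: "v ^ 4 = det B" using alg_closed_root[OF ac, of 4] by auto
  have l0: "l \<noteq> 0" using l AB by auto
  have v0: "v \<noteq> 0" using v AB by auto
  define A' where "A' = (1 / l) \<cdot>\<^sub>m A"
  define B' where "B' = (1 / v) \<cdot>\<^sub>m B"
  define h where "h = (cs, A', B')"
  have dA': "det A' = 1" unfolding A'_def by (rule det_smult_root[OF AB(1) l l0])
  have dB': "det B' = 1" unfolding B'_def by (rule det_smult_root[OF AB(3) v v0])
  have "h \<in> Gcomm 4" using AB dA' dB' c0 by (simp add: h_def Gcomm_def Gcal_def A'_def B'_def)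
  moreover have "act 4 g \<phi> = scl 4 (1 * l * v^2) (act 4 h \<phi>)" for \<phi>
    using act4_core[OF inf smult_entries[OF AB(1) l0] smult_entries[OF AB(3) v0], of cs 1 \<phi> cs]
    by (simp add: gg h_def act_def A'_def B'_def)
  moreover have "(1 * l * v^2) ^ wfac 4 = gdet 4 g"
    by (simp add: gg gdet_def wfac_def l v power_mult_distrib flip: power_mult)
  ultimately show ?thesis by blast
qed

lemma decomp5:
  fixes g :: "'a::field gelt"
  assumes inf: "infinite (UNIV::'a set)" and ac: "alg_closed_field_type TYPE('a)" and g: "g \<in> Gcal 5"
  shows "\<exists>h\<in>Gcomm 5. \<exists>e. e ^ wfac 5 = gdet 5 g \<and> (\<forall>\<phi>. act 5 g \<phi> = scl 5 e (act 5 h \<phi>))"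
proof -
  obtain cs A B where gg: "g = (cs, A, B)" and c0: "cs = []"
    and AB: "A \<in> carrier_mat 5 5" "det A \<noteq> 0" "B \<in> carrier_mat 5 5" "det B \<noteq> 0"
    using g by (auto simp: Gcal_def)
  obtain l where l: "l ^ 5 = det A" using alg_closed_root[OF ac, of 5] by auto
  obtain v where v: "v ^ 5 = det B" using alg_closed_root[OF ac, of 5] by auto
  have l0: "l \<noteq> 0" using l AB by auto
  have v0: "v \<noteq> 0" using v AB by auto
  define A' where "A' = (1 / l) \<cdot>\<^sub>m A"
  define B' where "B' = (1 / v) \<cdot>\<^sub>m B"
  define h where "h = (cs, A', B')"
  have dA': "det A' = 1" unfolding A'_def by (rule det_smult_root[OF AB(1) l l0])
  have dB': "det B' = 1" unfolding B'_def by (rule det_smult_root[OF AB(3) v v0])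
  have "h \<in> Gcomm 5" using AB dA' dB' c0 by (simp add: h_def Gcomm_def Gcal_def A'_def B'_def)
  moreover have "act 5 g \<phi> = scl 5 (1 * l^2 * v) (act 5 h \<phi>)" for \<phi>
    using act5_core[OF inf smult_entries[OF AB(1) l0] smult_entries[OF AB(3) v0], of cs 1 \<phi> cs]
    by (simp add: gg h_def act_def A'_def B'_def)
  moreover have "(1 * l^2 * v) ^ wfac 5 = gdet 5 g"
  proof -
    have "(1 * l^2 * v) ^ wfac 5 = (l ^ 5)^2 * v ^ 5" by (simp add: wfac_def power_mult_distrib flip: power_mult)
    then show ?thesis by (simp add: gg gdet_def l v)
  qed
  ultimately show ?thesis by blast
qed


lemma comm1:
  fixes h :: "'a::field gelt"
  assumes inf: "infinite (UNIV::'a set)" and h: "h \<in> Gcomm 1" and c: "c \<noteq> 0"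
  shows "\<exists>h'\<in>Gcomm 1. \<forall>\<phi>. act 1 h' (scl 1 c \<phi>) = scl 1 c (act 1 h \<phi>)"
proof -
  obtain cs A B where hh: "h = (cs, A, B)" and len: "length cs = 4" and u: "cs ! 0 = 1"
    and AB: "A = zero_mat 0 0" "B = zero_mat 0 0"
    using h by (auto simp: Gcomm_def Gcal_def)
  define h' where "h' = ([1, cs ! 1 * c^2, cs ! 2 * c, cs ! 3 * c^3], A, B)"
  have "h' \<in> Gcomm 1" using AB by (simp add: h'_def Gcomm_def Gcal_def)
  moreover have "act 1 h' (scl 1 c \<phi>) = scl 1 c (act 1 h \<phi>)" for \<phi>
    using act1_core[OF inf _ c, of "[1, cs ! 1 * c^2, cs ! 2 * c, cs ! 3 * c^3]" cs A B \<phi> A B] u c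
    by (simp add: hh h'_def act_def)
  ultimately show ?thesis by blast
qed

lemma comm2:
  fixes h :: "'a::field gelt"
  assumes inf: "infinite (UNIV::'a set)" and h: "h \<in> Gcomm 2" and c: "c \<noteq> 0"
  shows "\<exists>h'\<in>Gcomm 2. \<forall>\<phi>. act 2 h' (scl 2 c \<phi>) = scl 2 c (act 2 h \<phi>)"
proof -
  obtain cs A B where hh: "h = (cs, A, B)" and len: "length cs = 4" and u: "cs ! 0 = 1"
    and AB: "A = zero_mat 0 0" "B \<in> carrier_mat 2 2" "det B = 1"
    using h by (auto simp: Gcomm_def Gcal_def)
  define h' where "h' = ([1, cs ! 1 * c, cs ! 2 * c, cs ! 3 * c], A, B)"
  have "h' \<in> Gcomm 2" using AB by (simp add: h'_def Gcomm_def Gcal_def)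
  moreover have "act 2 h' (scl 2 c \<phi>) = scl 2 c (act 2 h \<phi>)" for \<phi>
    using act2_core[OF inf _ c one_neq_zero, of "[1, cs ! 1 * c, cs ! 2 * c, cs ! 3 * c]" B B cs A \<phi> A] u c
    by (simp add: hh h'_def act_def)
  ultimately show ?thesis by blast
qed

lemma comm3:
  fixes h :: "'a::field gelt"
  assumes inf: "infinite (UNIV::'a set)" and h: "h \<in> Gcomm 3" and c: "c \<noteq> 0"
  shows "\<exists>h'\<in>Gcomm 3. \<forall>\<phi>. act 3 h' (scl 3 c \<phi>) = scl 3 c (act 3 h \<phi>)"
proof -
  obtain cs A B where hh: "h = (cs, A, B)" and u: "cs ! 0 = 1"
    using h by (auto simp: Gcomm_def Gcal_def)
  have "act 3 h (scl 3 c \<phi>) = scl 3 c (act 3 h \<phi>)" for \<phi>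
    using act3_core[OF inf, of B 1 B cs cs A c \<phi> A] u
    by (simp add: hh act_def)
  then show ?thesis using h by blast
qed

lemma comm4:
  fixes h :: "'a::field gelt"
  assumes inf: "infinite (UNIV::'a set)" and h: "h \<in> Gcomm 4" and c: "c \<noteq> 0"
  shows "\<exists>h'\<in>Gcomm 4. \<forall>\<phi>. act 4 h' (scl 4 c \<phi>) = scl 4 c (act 4 h \<phi>)"
proof -
  obtain cs A B where hh: "h = (cs, A, B)"
    using h by (auto simp: Gcomm_def Gcal_def)
  have "act 4 h (scl 4 c \<phi>) = scl 4 c (act 4 h \<phi>)" for \<phi>
    using act4_core[OF inf, of A 1 A B 1 B cs c \<phi> cs]
    by (simp add: hh act_def)
  then show ?thesis using h by blast
qed

lemma comm5:
  fixes h :: "'a::field gelt"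
  assumes inf: "infinite (UNIV::'a set)" and h: "h \<in> Gcomm 5" and c: "c \<noteq> 0"
  shows "\<exists>h'\<in>Gcomm 5. \<forall>\<phi>. act 5 h' (scl 5 c \<phi>) = scl 5 c (act 5 h \<phi>)"
proof -
  obtain cs A B where hh: "h = (cs, A, B)"
    using h by (auto simp: Gcomm_def Gcal_def)
  have "act 5 h (scl 5 c \<phi>) = scl 5 c (act 5 h \<phi>)" for \<phi>
    using act5_core[OF inf, of A 1 A B 1 B cs c \<phi> cs]
    by (simp add: hh act_def)
  then show ?thesis using h by blast
qed

lemma decomp:
  fixes g :: "'a::field gelt"
  assumes inf: "infinite (UNIV::'a set)" and ac: "alg_closed_field_type TYPE('a)" and n: "n \<in> {1..5}"
    and g: "g \<in> Gcal n"
  shows "\<exists>h\<in>Gcomm n. \<exists>e. e ^ wfac n = gdet n g \<and> (\<forall>\<phi>. act n g \<phi> = scl n e (act n h \<phi>))"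
proof -
  have "n = 1 \<or> n = 2 \<or> n = 3 \<or> n = 4 \<or> n = 5" using n by auto
  then show ?thesis
  proof (elim disjE)
    assume e: "n = 1" show ?thesis unfolding e by (rule decomp1[OF inf g[unfolded e]])
  next
    assume e: "n = 2" show ?thesis unfolding e by (rule decomp2[OF inf ac g[unfolded e]])
  next
    assume e: "n = 3" show ?thesis unfolding e by (rule decomp3[OF inf ac g[unfolded e]])
  next
    assume e: "n = 4" show ?thesis unfolding e by (rule decomp4[OF inf ac g[unfolded e]])
  next
    assume e: "n = 5" show ?thesis unfolding e by (rule decomp5[OF inf ac g[unfolded e]])
  qed
qed

lemma comm:
  fixes h :: "'a::field gelt"
  assumes inf: "infinite (UNIV::'a set)" and n: "n \<in> {1..5}" and h: "h \<in> Gcomm n" and c: "c \<noteq> 0"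
  shows "\<exists>h'\<in>Gcomm n. \<forall>\<phi>. act n h' (scl n c \<phi>) = scl n c (act n h \<phi>)"
proof -
  have "n = 1 \<or> n = 2 \<or> n = 3 \<or> n = 4 \<or> n = 5" using n by auto
  then show ?thesis
  proof (elim disjE)
    assume e: "n = 1" show ?thesis unfolding e by (rule comm1[OF inf h[unfolded e] c])
  next
    assume e: "n = 2" show ?thesis unfolding e by (rule comm2[OF inf h[unfolded e] c])
  next
    assume e: "n = 3" show ?thesis unfolding e by (rule comm3[OF inf h[unfolded e] c])
  next
    assume e: "n = 4" show ?thesis unfolding e by (rule comm4[OF inf h[unfolded e] c])
  next
    assume e: "n = 5" show ?thesis unfolding e by (rule comm5[OF inf h[unfolded e] c])
  qed
qed


definition dgm :: "nat \<Rightarrow> (nat \<Rightarrow> 'a::field) \<Rightarrow> 'a mat" where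
  "dgm k f = mat k k (\<lambda>(i, j). if i = j then f i else 0)"

lemma dgm_carrier: "dgm k f \<in> carrier_mat k k"
  by (simp add: dgm_def)

lemma dgm_index: "i < k \<Longrightarrow> j < k \<Longrightarrow> dgm k f $$ (i, j) = (if i = j then f i else 0)"
  by (simp add: dgm_def)

lemma det_dgm: "det (dgm k f) = (\<Prod>i<k. f i)"
proof -
  have "det (dgm k f) = prod_list (diag_mat (dgm k f))"
    by (rule det_upper_triangular[of _ k]) (auto simp: upper_triangular_def dgm_def)
  also have "\<dots> = (\<Prod>i = 0..<k. f i)" by (simp add: prod_list_diag_prod dgm_def)
  finally show ?thesis by (simp add: atLeast0LessThan)
qed

lemma sum_if_mult: "finite A \<Longrightarrow> (\<Sum>i\<in>A. (if i = j then c i else 0) * (y i :: 'a::semiring_0)) = (if j \<in> A then c j * y j else 0)"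
proof -
  assume "finite A"
  have "(\<Sum>i\<in>A. (if i = j then c i else 0) * y i) = (\<Sum>i\<in>A. if j = i then c i * y i else 0)"
    by (intro sum.cong) auto
  then show ?thesis using \<open>finite A\<close> by simp
qed

lemma sum_if_mult': "finite A \<Longrightarrow> (\<Sum>i\<in>A. (if j = i then c i else 0) * (y i :: 'a::semiring_0)) = (if j \<in> A then c j * y j else 0)"
  using sum_if_mult[of A j c y] by (simp add: eq_commute)

lemma one_mat_index: "i < k \<Longrightarrow> j < k \<Longrightarrow> (1\<^sub>m k :: 'a::field mat) $$ (i, j) = (if i = j then 1 else 0)"
  by simp

lemma mpeval_lin_one: "j < k \<Longrightarrow> mpeval x (linsubst k (1\<^sub>m k) j) = (x j :: 'a::field)"
  by (simp add: mpeval_lin one_mat_index sum_if_mult del: One_nat_def)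

lemma mpeval_cong: "(\<And>m i. m \<in> Poly_Mapping.keys F \<Longrightarrow> i \<in> Poly_Mapping.keys m \<Longrightarrow> y i = y' i) \<Longrightarrow>
   mpeval y F = mpeval y' F"
  unfolding mpeval_monv by (intro sum.cong refl arg_cong2[where f = "(*)"] monv_cong) auto

lemma torus_monv:
  fixes F :: "'a::field mpoly"
  assumes inf: "infinite (UNIV::'a set)" and ev: "\<And>\<phi>. mpeval (\<lambda>i. \<beta> i * \<phi> i) F = mpeval \<phi> F"
    and m: "m \<in> Poly_Mapping.keys F"
  shows "monv \<beta> m = 1"
proof -
  have "Dsc \<beta> F = F" by (rule mpoly_eqI_eval[OF inf]) (simp add: mpeval_Dsc ev)
  then have "monv \<beta> m * Poly_Mapping.lookup F m = Poly_Mapping.lookup F m"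
    by (metis lookup_Dsc)
  then show ?thesis using m by (simp add: in_keys_iff)
qed

lemma monv_tw:
  assumes "\<And>s. s \<in> Poly_Mapping.keys m \<Longrightarrow> \<beta> s = t ^ u s * (inverse t) ^ w s"
  shows "monv \<beta> m = t ^ (\<Sum>s\<in>Poly_Mapping.keys m. u s * Poly_Mapping.lookup m s)
     * (inverse t) ^ (\<Sum>s\<in>Poly_Mapping.keys m. w s * Poly_Mapping.lookup m s)"
proof -
  have "monv \<beta> m = (\<Prod>s\<in>Poly_Mapping.keys m. (t ^ u s * (inverse t) ^ w s) ^ Poly_Mapping.lookup m s)"
    unfolding monv_def using assms by (intro prod.cong) auto
  also have "\<dots> = t ^ (\<Sum>s\<in>Poly_Mapping.keys m. u s * Poly_Mapping.lookup m s)
     * (inverse t) ^ (\<Sum>s\<in>Poly_Mapping.keys m. w s * Poly_Mapping.lookup m s)"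
    by (simp add: power_sum power_mult_distrib prod.distrib power_mult)
  finally show ?thesis .
qed

lemma exp_compare:
  assumes inf: "infinite (UNIV::'a::field set)" and h: "\<And>t::'a. t \<noteq> 0 \<Longrightarrow> t ^ a * (inverse t) ^ b = 1"
  shows "a = b"
proof (rule ccontr)
  assume ab: "a \<noteq> b"
  define v :: "nat \<Rightarrow> 'a" where "v k = (if k = a then 1 else -1)" for k
  have "\<forall>k\<in>{a, b}. v k = 0"
  proof (rule vandermonde_gen[OF inf, where e = id])
    fix c :: 'a assume c: "c \<noteq> 0"
    have "c ^ a * (inverse c) ^ b * c ^ b = c ^ b" using h[OF c] by simp
    then have "c ^ a = c ^ b" using c by (simp add: power_inverse field_simps)
    then show "(\<Sum>k\<in>{a, b}. c ^ id k * v k) = 0" using ab by (simp add: v_def)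
  qed auto
  then show False by (simp add: v_def)
qed

lemma mons4_distinct: "distinct mons4"
proof -
  let ?f = "\<lambda>m. [Poly_Mapping.lookup m 0, Poly_Mapping.lookup m 1, Poly_Mapping.lookup m 2, Poly_Mapping.lookup m 3]"
  have "distinct (map ?f mons4)"
    by (simp add: mons4_eq pp2_def lookup_add lookup_single when_def)
  then show ?thesis by (simp add: distinct_map)
qed

lemma lookup_quad4: "t < 10 \<Longrightarrow> Poly_Mapping.lookup (quad4 \<phi> a) (mons4 ! t) = \<phi> (10 * a + t)"
proof -
  assume t: "t < 10"
  have len: "length mons4 = 10" by (simp add: mons4_eq)
  have "Poly_Mapping.lookup (quad4 \<phi> a) (mons4 ! t) = (\<Sum>t'<10. \<phi> (10 * a + t') * (if t' = t then 1 else 0))"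
    unfolding quad4_def lookup_sum lookup_Const_mult
    by (intro sum.cong refl) (use t len mons4_distinct in \<open>auto simp: Mon_def lookup_single when_def nth_eq_iff_index_eq\<close>)
  also have "\<dots> = \<phi> (10 * a + t)" using t by (simp add: if_distrib sum.delta cong: if_cong)
  finally show ?thesis .
qed

lemma msubst_lin_one_quad4:
  assumes inf: "infinite (UNIV::'a::field set)"
  shows "msubst (linsubst 4 (1\<^sub>m 4)) (quad4 \<phi> b) = quad4 (\<phi>::nat \<Rightarrow> 'a) b"
proof (rule mpoly_eqI_eval[OF inf])
  fix x :: "nat \<Rightarrow> 'a"
  show "mpeval x (msubst (linsubst 4 (1\<^sub>m 4)) (quad4 \<phi> b)) = mpeval x (quad4 \<phi> b)"
    unfolding mpeval_msubst mpeval_quad4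
  proof (intro sum.cong refl arg_cong2[where f = "(*)"] monv_cong)
    fix t i assume "t \<in> {..<10}" "i \<in> Poly_Mapping.keys (mons4 ! t)"
    then have "i < 4" using mons4_props by auto
    then show "mpeval x (linsubst 4 (1\<^sub>m 4) i) = x i" by (rule mpeval_lin_one)
  qed
qed

lemma act4_diag:
  assumes inf: "infinite (UNIV::'a::field set)"
  shows "act 4 (cs, dgm 2 d, 1\<^sub>m 4) \<phi> = (\<lambda>i. if i < 20 then d (i div 10) * (\<phi>::nat \<Rightarrow> 'a) i else 0)"
proof (rule ext)
  fix i :: nat
  show "act 4 (cs, dgm 2 d, 1\<^sub>m 4) \<phi> i = (if i < 20 then d (i div 10) * \<phi> i else 0)"
  proof (cases "i < 20")
    case True
    then have a: "i div 10 < 2" and t: "i mod 10 < 10" by auto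
    have "act 4 (cs, dgm 2 d, 1\<^sub>m 4) \<phi> i = (\<Sum>b<2. dgm 2 d $$ (i div 10, b) * \<phi> (10 * b + i mod 10))"
      using True t by (simp add: act_def act4_def lookup_sum msubst_lin_one_quad4[OF inf] lookup_quad4)
    also have "\<dots> = d (i div 10) * \<phi> (10 * (i div 10) + i mod 10)"
      using a by (simp add: dgm_index sum_if_mult')
    also have "10 * (i div 10) + i mod 10 = i" by simp
    finally show ?thesis using True by simp
  next
    case False then show ?thesis by (simp add: act_def act4_def)
  qed
qed


lemma div4:
  fixes F :: "'a::field mpoly"
  assumes inf: "infinite (UNIV::'a set)" and KX: "F \<in> KX 4 K" and inv: "Gn_invariant 4 F"
    and hom: "homogeneous 4 d F" and F0: "F \<noteq> 0"
  shows "2 dvd d"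
proof -
  obtain m where m: "m \<in> Poly_Mapping.keys F" using F0 keys_eq_empty by blast
  have vars: "\<And>m i. m \<in> Poly_Mapping.keys F \<Longrightarrow> i \<in> Poly_Mapping.keys m \<Longrightarrow> i < 20"
    using KX by (auto simp: KX_def Ndim_def)
  define u where "u s = (if s < 10 then 1 else 0 :: nat)" for s :: nat
  define w where "w s = (if 10 \<le> s \<and> s < 20 then 1 else 0 :: nat)" for s :: nat
  define a where "a = (\<Sum>s\<in>Poly_Mapping.keys m. u s * Poly_Mapping.lookup m s)"
  define b where "b = (\<Sum>s\<in>Poly_Mapping.keys m. w s * Poly_Mapping.lookup m s)"
  have key: "t ^ a * (inverse t) ^ b = 1" if t: "t \<noteq> 0" for t :: 'a
  proof -
    define f where "f i = (if i = 0 then t else inverse t)" for i :: nat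
    define \<beta> where "\<beta> i = (if i < 10 then t else if i < 20 then inverse t else 1)" for i :: nat
    have g: "([], dgm 2 f, 1\<^sub>m 4) \<in> Gcomm 4"
      using t by (simp add: Gcomm_def Gcal_def dgm_carrier det_dgm f_def lessThan_Suc eval_nat_numeral)
    have ev: "mpeval (\<lambda>i. \<beta> i * \<phi> i) F = mpeval \<phi> F" for \<phi>
    proof -
      have "mpeval (\<lambda>i. \<beta> i * \<phi> i) F = mpeval (act 4 ([], dgm 2 f, 1\<^sub>m 4) \<phi>) F"
        unfolding act4_diag[OF inf]
        by (rule mpeval_cong) (auto dest!: vars simp: \<beta>_def f_def)
      also have "\<dots> = mpeval \<phi> F" using inv g by (simp add: Gn_invariant_def)
      finally show ?thesis .
    qed
    have "monv \<beta> m = 1" by (rule torus_monv[OF inf ev m])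
    moreover have "monv \<beta> m = t ^ a * (inverse t) ^ b"
      unfolding a_def b_def by (rule monv_tw) (auto simp: \<beta>_def u_def w_def)
    ultimately show ?thesis by simp
  qed
  have ab: "a = b" by (rule exp_compare[OF inf key])
  have "d = (\<Sum>s\<in>Poly_Mapping.keys m. wt 4 s * Poly_Mapping.lookup m s)"
    using hom m by (simp add: homogeneous_def)
  also have "\<dots> = (\<Sum>s\<in>Poly_Mapping.keys m. u s * Poly_Mapping.lookup m s + w s * Poly_Mapping.lookup m s)"
    by (intro sum.cong refl) (auto simp: wt_def u_def w_def dest: vars[OF m])
  also have "\<dots> = a + b" by (simp add: a_def b_def sum.distrib)
  finally show ?thesis using ab by simp
qed


lemma pairs5_props:
  fixes p p' :: nat
  assumes "p < 10" "p' < 10"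
  shows "(pairs5 ! p' = pairs5 ! p) = (p' = p)" "pairs5 ! p' \<noteq> (snd (pairs5 ! p), fst (pairs5 ! p))"
    "fst (pairs5 ! p) < snd (pairs5 ! p)"
proof -
  have d: "distinct pairs5" and len: "length pairs5 = 10" by (simp_all add: pairs5_eq)
  show "(pairs5 ! p' = pairs5 ! p) = (p' = p)" using d len assms by (simp add: nth_eq_iff_index_eq)
  have lt: "\<forall>q\<in>set pairs5. fst q < snd q" by (simp add: pairs5_eq)
  have "pairs5 ! p \<in> set pairs5" "pairs5 ! p' \<in> set pairs5" using len assms by auto
  then have a: "fst (pairs5 ! p) < snd (pairs5 ! p)" and b: "fst (pairs5 ! p') < snd (pairs5 ! p')"
    using lt by blast+
  show "fst (pairs5 ! p) < snd (pairs5 ! p)" by (rule a)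
  show "pairs5 ! p' \<noteq> (snd (pairs5 ! p), fst (pairs5 ! p))"
  proof
    assume "pairs5 ! p' = (snd (pairs5 ! p), fst (pairs5 ! p))"
    then have "fst (pairs5 ! p') = snd (pairs5 ! p)" "snd (pairs5 ! p') = fst (pairs5 ! p)" by auto
    with a b show False by simp
  qed
qed

lemma alt5_pair:
  assumes p: "p < 10"
  shows "alt5 \<phi> (fst (pairs5 ! p)) (snd (pairs5 ! p)) = (\<Sum>l<5. Const (\<phi> (5 * p + l)) * Var l)"
proof -
  have "alt5 \<phi> (fst (pairs5 ! p)) (snd (pairs5 ! p)) =
     (\<Sum>p'<10. if p' = p then (\<Sum>l<5. Const (\<phi> (5 * p' + l)) * Var l) else 0)"
    unfolding alt5_def
  proof (rule sum.cong[OF refl])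
    fix p' :: nat assume p': "p' \<in> {..<10}"
    note pp = pairs5_props[OF p, of p']
    show "(\<Sum>l<5. if pairs5 ! p' = (fst (pairs5 ! p), snd (pairs5 ! p)) then Const (\<phi> (5 * p' + l)) * Var l
           else if pairs5 ! p' = (snd (pairs5 ! p), fst (pairs5 ! p)) then - Const (\<phi> (5 * p' + l)) * Var l else 0) =
          (if p' = p then \<Sum>l<5. Const (\<phi> (5 * p' + l)) * Var l else 0)"
      using p' pp by auto
  qed
  also have "\<dots> = (\<Sum>l<5. Const (\<phi> (5 * p + l)) * Var l)" using p by simp
  finally show ?thesis .
qed

lemma single_one_eq: "(Poly_Mapping.single l' (1::nat) = Poly_Mapping.single l 1) = (l' = l)"
proof
  assume "Poly_Mapping.single l' (1::nat) = Poly_Mapping.single l 1"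
  then have "Poly_Mapping.lookup (Poly_Mapping.single l' (1::nat)) l' = Poly_Mapping.lookup (Poly_Mapping.single l 1) l'"
    by simp
  then show "l' = l" by (simp add: lookup_single when_def split: if_splits)
qed simp

lemma single_one_eq': "(Poly_Mapping.single l' (Suc 0) = Poly_Mapping.single l (Suc 0)) = (l' = l)"
  using single_one_eq by simp

lemma lookup_alt5:
  assumes p: "p < 10" and l: "l < 5"
  shows "Poly_Mapping.lookup (alt5 \<phi> (fst (pairs5 ! p)) (snd (pairs5 ! p))) (Poly_Mapping.single l 1) = \<phi> (5 * p + l)"
proof -
  have "Poly_Mapping.lookup (alt5 \<phi> (fst (pairs5 ! p)) (snd (pairs5 ! p))) (Poly_Mapping.single l 1) =
      (\<Sum>l'<5. \<phi> (5 * p + l') * (if l' = l then 1 else 0))"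
    unfolding alt5_pair[OF p] lookup_sum lookup_Const_mult
    by (intro sum.cong refl) (simp add: Var_def lookup_single when_def single_one_eq single_one_eq')
  also have "\<dots> = (\<Sum>l'<5. if l' = l then \<phi> (5 * p + l') else 0)"
    by (intro sum.cong refl) simp
  also have "\<dots> = \<phi> (5 * p + l)" using l by simp
  finally show ?thesis .
qed

lemma M_diag:
  assumes i: "i < 5" and j: "j < 5"
  shows "(\<Sum>k<5. \<Sum>l<5. Const (dgm 5 f $$ (i, k) * dgm 5 f $$ (j, l)) * alt5 \<phi> k l) = Const (f i * f j) * alt5 \<phi> i j"
proof -
  have inner: "(\<Sum>l<5. Const (dgm 5 f $$ (i, k) * dgm 5 f $$ (j, l)) * alt5 \<phi> k l) =
      (if k = i then Const (f i * f j) * alt5 \<phi> i j else 0)" if k: "k \<in> {..<5}" for k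
  proof (cases "k = i")
    case True
    have "(\<Sum>l<5. Const (dgm 5 f $$ (i, k) * dgm 5 f $$ (j, l)) * alt5 \<phi> k l) =
        (\<Sum>l<5. if l = j then Const (f i * f j) * alt5 \<phi> i j else 0)"
      by (intro sum.cong refl) (use True i j in \<open>auto simp: dgm_index Const_def\<close>)
    then show ?thesis using True j by simp
  next
    case False
    then show ?thesis using k i by (simp add: dgm_index Const_def)
  qed
  have "(\<Sum>k<5. \<Sum>l<5. Const (dgm 5 f $$ (i, k) * dgm 5 f $$ (j, l)) * alt5 \<phi> k l) =
        (\<Sum>k<5. if k = i then Const (f i * f j) * alt5 \<phi> i j else 0)"
    by (rule sum.cong[OF refl inner])
  also have "\<dots> = Const (f i * f j) * alt5 \<phi> i j" using i by simp
  finally show ?thesis .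
qed

lemma msubst_lin_one_alt5:
  assumes inf: "infinite (UNIV::'a::field set)"
  shows "msubst (linsubst 5 (1\<^sub>m 5)) (Const c * alt5 \<phi> i j) = Const c * alt5 (\<phi>::nat \<Rightarrow> 'a) i j"
proof (rule mpoly_eqI_eval[OF inf])
  fix x :: "nat \<Rightarrow> 'a"
  show "mpeval x (msubst (linsubst 5 (1\<^sub>m 5)) (Const c * alt5 \<phi> i j)) = mpeval x (Const c * alt5 \<phi> i j)"
    unfolding mpeval_msubst mpeval_mult mpeval_Const mpeval_alt5
    by (intro arg_cong2[where f = "(*)"] sum.cong refl) (simp add: mpeval_lin_one)
qed

lemma act5_diag:
  assumes inf: "infinite (UNIV::'a::field set)"
  shows "act 5 (cs, dgm 5 f, 1\<^sub>m 5) \<phi> = (\<lambda>s. if s < 50 then f (fst (pairs5 ! (s div 5))) * f (snd (pairs5 ! (s div 5))) * (\<phi>::nat \<Rightarrow> 'a) s else 0)"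
proof (rule ext)
  fix s :: nat
  show "act 5 (cs, dgm 5 f, 1\<^sub>m 5) \<phi> s = (if s < 50 then f (fst (pairs5 ! (s div 5))) * f (snd (pairs5 ! (s div 5))) * \<phi> s else 0)"
  proof (cases "s < 50")
    case True
    have p: "s div 5 < 10" and l: "s mod 5 < 5" using True by auto
    have ij: "fst (pairs5 ! (s div 5)) < 5" "snd (pairs5 ! (s div 5)) < 5" using pairs5_lt[OF p] by auto
    have "act 5 (cs, dgm 5 f, 1\<^sub>m 5) \<phi> s = f (fst (pairs5 ! (s div 5))) * f (snd (pairs5 ! (s div 5))) * \<phi> (5 * (s div 5) + s mod 5)"
      using True unfolding act_def act5_def Let_def prod.case
      by (simp add: M_diag[OF ij] msubst_lin_one_alt5[OF inf] lookup_alt5[OF p l] del: One_nat_def)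
    also have "5 * (s div 5) + s mod 5 = s" by simp
    finally show ?thesis using True by simp
  next
    case False then show ?thesis by (simp add: act_def act5_def)
  qed
qed


lemma sum_two_points:
  assumes "i \<noteq> j" "i < 5" "j < (5::nat)"
  shows "(\<Sum>k<5. if k = i \<or> k = j then x else 0) = 2 * (x::nat)"
proof -
  have "(\<Sum>k<5. if k = i \<or> k = j then x else 0) = (\<Sum>k<5. (if k = i then x else 0) + (if k = j then x else 0))"
    by (intro sum.cong refl) (use assms in auto)
  also have "\<dots> = 2 * x" using assms by (simp add: sum.distrib)
  finally show ?thesis .
qed

lemma div5:
  fixes F :: "'a::field mpoly"
  assumes inf: "infinite (UNIV::'a set)" and KX: "F \<in> KX 5 K" and inv: "Gn_invariant 5 F"
    and hom: "homogeneous 5 d F" and F0: "F \<noteq> 0"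
  shows "5 dvd d"
proof -
  obtain m where m: "m \<in> Poly_Mapping.keys F" using F0 keys_eq_empty by blast
  have vars: "\<And>m i. m \<in> Poly_Mapping.keys F \<Longrightarrow> i \<in> Poly_Mapping.keys m \<Longrightarrow> i < 50"
    using KX by (auto simp: KX_def Ndim_def)
  have ms: "s < 50" if "s \<in> Poly_Mapping.keys m" for s using vars[OF m that] .
  define fp where "fp s = fst (pairs5 ! (s div 5))" for s
  define sp where "sp s = snd (pairs5 ! (s div 5))" for s
  have pr: "fp s < sp s" "sp s < 5" if "s < 50" for s
    using pairs5_props(3)[of "s div 5" 0] pairs5_lt[of "s div 5"] that by (auto simp: fp_def sp_def)
  define occ where "occ k = (\<Sum>s\<in>Poly_Mapping.keys m. if k = fp s \<or> k = sp s then Poly_Mapping.lookup m s else 0)" for k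
  have claim: "occ 0 = occ b" if b: "b \<in> {1, 2, 3, 4}" for b
  proof -
    define u where "u s = (if 0 = fp s \<or> 0 = sp s then 1 else 0 :: nat)" for s
    define w where "w s = (if b = fp s \<or> b = sp s then 1 else 0 :: nat)" for s
    have key: "t ^ occ 0 * (inverse t) ^ occ b = 1" if t: "t \<noteq> 0" for t :: 'a
    proof -
      define f where "f i = (if i = 0 then t else if i = b then inverse t else 1)" for i :: nat
      define \<beta> where "\<beta> s = (if s < 50 then f (fp s) * f (sp s) else 1)" for s :: nat
      have detf: "(\<Prod>i<5. f i) = 1"
        using b t by (auto simp: f_def lessThan_Suc eval_nat_numeral)
      have g: "([], dgm 5 f, 1\<^sub>m 5) \<in> Gcomm 5"
        using detf by (simp add: Gcomm_def Gcal_def dgm_carrier det_dgm)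
      have ev: "mpeval (\<lambda>i. \<beta> i * \<phi> i) F = mpeval \<phi> F" for \<phi>
      proof -
        have "mpeval (\<lambda>i. \<beta> i * \<phi> i) F = mpeval (act 5 ([], dgm 5 f, 1\<^sub>m 5) \<phi>) F"
          unfolding act5_diag[OF inf]
          by (rule mpeval_cong) (auto dest!: vars simp: \<beta>_def fp_def sp_def)
        also have "\<dots> = mpeval \<phi> F" using inv g by (simp add: Gn_invariant_def)
        finally show ?thesis .
      qed
      have "monv \<beta> m = 1" by (rule torus_monv[OF inf ev m])
      moreover have "monv \<beta> m = t ^ (\<Sum>s\<in>Poly_Mapping.keys m. u s * Poly_Mapping.lookup m s)
          * (inverse t) ^ (\<Sum>s\<in>Poly_Mapping.keys m. w s * Poly_Mapping.lookup m s)"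
      proof (rule monv_tw)
        fix s assume s: "s \<in> Poly_Mapping.keys m"
        have fk: "f k = t ^ (if k = 0 then 1 else 0) * (inverse t) ^ (if k = b then 1 else 0)" for k
          using b by (auto simp: f_def)
        have "fp s \<noteq> sp s" using pr[OF ms[OF s]] by simp
        then show "\<beta> s = t ^ u s * (inverse t) ^ w s"
          using ms[OF s] b unfolding \<beta>_def fk u_def w_def by (auto simp: power_add)
      qed
      moreover have "(\<Sum>s\<in>Poly_Mapping.keys m. u s * Poly_Mapping.lookup m s) = occ 0"
        unfolding occ_def by (intro sum.cong refl) (simp add: u_def)
      moreover have "(\<Sum>s\<in>Poly_Mapping.keys m. w s * Poly_Mapping.lookup m s) = occ b"
        unfolding occ_def by (intro sum.cong refl) (simp add: w_def)
      ultimately show ?thesis by simp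
    qed
    show ?thesis by (rule exp_compare[OF inf key])
  qed
  have all: "occ k = occ 0" if "k < 5" for k
  proof (cases "k = 0")
    case False
    then have "k \<in> {1, 2, 3, 4}" using that by auto
    then show ?thesis using claim[of k] by simp
  qed simp
  have "(\<Sum>k<5. occ k) = (\<Sum>s\<in>Poly_Mapping.keys m. \<Sum>k<5. if k = fp s \<or> k = sp s then Poly_Mapping.lookup m s else 0)"
    unfolding occ_def by (rule sum.swap)
  also have "\<dots> = (\<Sum>s\<in>Poly_Mapping.keys m. 2 * Poly_Mapping.lookup m s)"
  proof (intro sum.cong refl sum_two_points)
    fix s assume s: "s \<in> Poly_Mapping.keys m"
    have "fp s < sp s" "sp s < 5" using pr[OF ms[OF s]] by auto
    then show "fp s \<noteq> sp s" "fp s < 5" "sp s < 5" by auto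
  qed
  also have "\<dots> = 2 * d"
  proof -
    have "d = (\<Sum>s\<in>Poly_Mapping.keys m. wt 5 s * Poly_Mapping.lookup m s)"
      using hom m by (simp add: homogeneous_def)
    also have "\<dots> = (\<Sum>s\<in>Poly_Mapping.keys m. Poly_Mapping.lookup m s)" by (simp add: wt_def)
    finally show ?thesis by (simp add: sum_distrib_left)
  qed
  finally have "(\<Sum>k<5. occ k) = 2 * d" .
  moreover have "(\<Sum>k<5. occ k) = (\<Sum>k<(5::nat). occ 0)"
    by (rule sum.cong[OF refl], rule all) simp
  moreover have "(\<Sum>k<(5::nat). occ 0) = 5 * occ 0" by simp
  ultimately have "5 * occ 0 = 2 * d" by linarith
  then show ?thesis by presburger
qed


definition wdeg :: "nat \<Rightarrow> (nat \<Rightarrow>\<^sub>0 nat) \<Rightarrow> nat" where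
  "wdeg n m = (\<Sum>i\<in>Poly_Mapping.keys m. wt n i * Poly_Mapping.lookup m i)"

lemma hom_scale:
  assumes "homogeneous n d F"
  shows "mpeval (scl n c \<phi>) F = c ^ d * mpeval \<phi> F"
proof -
  have mv: "monv (scl n c \<phi>) m = c ^ d * monv \<phi> m" if "m \<in> Poly_Mapping.keys F" for m
  proof -
    have "monv (scl n c \<phi>) m = monv (\<lambda>i. c ^ wt n i) m * monv \<phi> m"
      unfolding scl_def by (rule monv_mult)
    moreover have "monv (\<lambda>i. c ^ wt n i) m = c ^ (\<Sum>i\<in>Poly_Mapping.keys m. wt n i * Poly_Mapping.lookup m i)"
      by (simp add: monv_def power_sum power_mult)
    moreover have "(\<Sum>i\<in>Poly_Mapping.keys m. wt n i * Poly_Mapping.lookup m i) = d"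
      using assms that by (simp add: homogeneous_def)
    ultimately show ?thesis by simp
  qed
  show ?thesis unfolding mpeval_monv sum_distrib_left
    by (intro sum.cong refl) (simp add: mv mult_ac)
qed

lemma wfac_pos: "wfac n > 0"
  by (simp add: wfac_def)

lemma part1:
  fixes F :: "'a::field mpoly"
  assumes inf: "infinite (UNIV::'a set)" and ac: "alg_closed_field_type TYPE('a)" and n: "n \<in> {1..5}"
    and KX: "F \<in> KX n K" and inv: "Gn_invariant n F" and hom: "homogeneous n d F"
  shows "\<exists>k. weight_invariant n k F \<and> (F \<noteq> 0 \<longrightarrow> d = wfac n * k)"
proof (cases "F = 0")
  case True
  then show ?thesis by (auto simp: weight_invariant_def)
next
  case False
  have dv: "wfac n dvd d"
  proof -
    have "n = 1 \<or> n = 2 \<or> n = 3 \<or> n = 4 \<or> n = 5" using n by auto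
    then show ?thesis
    proof (elim disjE)
      assume e: "n = 4" show ?thesis using div4[OF inf KX[unfolded e] inv[unfolded e] hom[unfolded e] False] e
        by (simp add: wfac_def)
    next
      assume e: "n = 5" show ?thesis using div5[OF inf KX[unfolded e] inv[unfolded e] hom[unfolded e] False] e
        by (simp add: wfac_def)
    qed (auto simp: wfac_def)
  qed
  then obtain k where dk: "d = wfac n * k" by (auto elim: dvdE)
  have "weight_invariant n k F"
    unfolding weight_invariant_def
  proof (intro ballI allI)
    fix g :: "'a gelt" and \<phi> assume g: "g \<in> Gcal n"
    obtain h e where h: "h \<in> Gcomm n" and e: "e ^ wfac n = gdet n g"
      and act: "\<And>\<phi>. act n g \<phi> = scl n e (act n h \<phi>)"
      using decomp[OF inf ac n g] by blast
    have "mpeval (act n g \<phi>) F = e ^ d * mpeval (act n h \<phi>) F"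
      unfolding act by (rule hom_scale[OF hom])
    also have "mpeval (act n h \<phi>) F = mpeval \<phi> F" using inv h by (simp add: Gn_invariant_def)
    also have "e ^ d = gdet n g ^ k" by (simp add: dk power_mult e)
    finally show "mpeval (act n g \<phi>) F = gdet n g ^ k * mpeval \<phi> F" .
  qed
  then show ?thesis using dk by blast
qed

definition hc :: "nat \<Rightarrow> nat \<Rightarrow> 'a::field mpoly \<Rightarrow> 'a mpoly" where
  "hc n d F = Poly_Mapping.mapp (\<lambda>m v. if wdeg n m = d then v else 0) F"

lemma lookup_hc: "Poly_Mapping.lookup (hc n d F) m = (if wdeg n m = d then Poly_Mapping.lookup F m else 0)"
  by (simp add: hc_def lookup_mapp when_def in_keys_iff)

lemma keys_hc: "Poly_Mapping.keys (hc n d F) \<subseteq> Poly_Mapping.keys F"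
  by (simp add: hc_def keys_mapp_subset)

lemma hc_KX: "subfield K \<Longrightarrow> F \<in> KX n K \<Longrightarrow> hc n d F \<in> KX n K"
  using keys_hc[of n d F] by (auto simp: KX_def lookup_hc subfield_def)

lemma hc_hom: "homogeneous n d (hc n d F)"
  by (auto simp: homogeneous_def in_keys_iff lookup_hc wdeg_def split: if_splits)

lemma hc_sum:
  assumes "\<forall>m\<in>Poly_Mapping.keys F. wdeg n m \<le> D"
  shows "F = (\<Sum>d\<le>D. hc n d F)"
proof (rule poly_mapping_eqI)
  fix m
  have "Poly_Mapping.lookup (\<Sum>d\<le>D. hc n d F) m = (\<Sum>d\<le>D. if wdeg n m = d then Poly_Mapping.lookup F m else 0)"
    by (simp add: lookup_sum lookup_hc)
  also have "\<dots> = (if wdeg n m \<le> D then Poly_Mapping.lookup F m else 0)"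
    by (simp add: eq_commute[of "wdeg n m"])
  also have "\<dots> = Poly_Mapping.lookup F m" using assms by (auto simp: in_keys_iff)
  finally show "Poly_Mapping.lookup F m = Poly_Mapping.lookup (\<Sum>d\<le>D. hc n d F) m" by simp
qed

lemma hc_zero:
  assumes "\<forall>m\<in>Poly_Mapping.keys F. wdeg n m \<le> D" "D < d"
  shows "hc n d F = 0"
proof (rule poly_mapping_eqI)
  fix m
  show "Poly_Mapping.lookup (hc n d F) m = Poly_Mapping.lookup 0 m"
  proof (cases "m \<in> Poly_Mapping.keys F")
    case True
    then have "wdeg n m \<noteq> d" using assms by auto
    then show ?thesis by (simp add: lookup_hc)
  next
    case False
    then show ?thesis by (simp add: lookup_hc in_keys_iff)
  qed
qed

lemma hc_inv:
  fixes F :: "'a::field mpoly"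
  assumes inf: "infinite (UNIV::'a set)" and n: "n \<in> {1..5}" and inv: "Gn_invariant n F"
  shows "Gn_invariant n (hc n d F)"
proof -
  define D where "D = (\<Sum>m\<in>Poly_Mapping.keys F. wdeg n m)"
  have DD: "\<forall>m\<in>Poly_Mapping.keys F. wdeg n m \<le> D"
    unfolding D_def by (auto intro: member_le_sum)
  have all: "\<forall>d\<in>{..D}. mpeval (act n h \<phi>) (hc n d F) - mpeval \<phi> (hc n d F) = 0"
    if h: "h \<in> Gcomm n" for h \<phi>
  proof (rule vandermonde_gen[OF inf, where e = id])
    fix c :: 'a assume c: "c \<noteq> 0"
    obtain h' where h': "h' \<in> Gcomm n" and hh: "\<And>\<psi>. act n h' (scl n c \<psi>) = scl n c (act n h \<psi>)"
      using comm[OF inf n h c] by blast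
    have sc: "mpeval (scl n c \<psi>) F = (\<Sum>d\<le>D. c ^ d * mpeval \<psi> (hc n d F))" for \<psi>
      by (subst (1) hc_sum[OF DD]) (simp add: mpeval_sum hom_scale[OF hc_hom])
    have "(\<Sum>d\<le>D. c ^ d * mpeval (act n h \<phi>) (hc n d F)) = mpeval (scl n c (act n h \<phi>)) F"
      by (simp add: sc)
    also have "\<dots> = mpeval (act n h' (scl n c \<phi>)) F" by (simp add: hh)
    also have "\<dots> = mpeval (scl n c \<phi>) F" using inv h' by (simp add: Gn_invariant_def)
    also have "\<dots> = (\<Sum>d\<le>D. c ^ d * mpeval \<phi> (hc n d F))" by (simp add: sc)
    finally show "(\<Sum>d\<in>{..D}. c ^ id d * (mpeval (act n h \<phi>) (hc n d F) - mpeval \<phi> (hc n d F))) = 0"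
      by (simp add: right_diff_distrib sum_subtractf)
  qed auto
  show ?thesis
  proof (cases "d \<le> D")
    case True
    then show ?thesis using all by (auto simp: Gn_invariant_def)
  next
    case False
    then show ?thesis using hc_zero[OF DD] by (simp add: Gn_invariant_def)
  qed
qed

lemma gt_exists:
  fixes t :: "'a::field"
  assumes n: "n \<in> {1..5}" and t: "t \<noteq> 0"
  shows "\<exists>g\<in>Gcal n. gdet n g = t"
proof -
  define f where "f i = (if i = 0 then t else 1)" for i :: nat
  have p4: "(\<Prod>i<4. f i) = t" by (simp add: f_def lessThan_Suc eval_nat_numeral)
  have p5: "(\<Prod>i<5. f i) = t" by (simp add: f_def lessThan_Suc eval_nat_numeral)
  have "n = 1 \<or> n = 2 \<or> n = 3 \<or> n = 4 \<or> n = 5" using n by auto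
  then show ?thesis
  proof (elim disjE)
    assume e: "n = 1"
    have "([inverse t, 0, 0, 0], zero_mat 0 0, zero_mat 0 0) \<in> Gcal n" using t e by (simp add: Gcal_def)
    moreover have "gdet n ([inverse t, 0, 0, 0], zero_mat 0 0, zero_mat 0 0) = t" using e by (simp add: gdet_def)
    ultimately show ?thesis by blast
  next
    assume e: "n = 2"
    have "([t, 0, 0, 0], zero_mat 0 0, 1\<^sub>m 2) \<in> Gcal n" using t e by (simp add: Gcal_def)
    moreover have "gdet n ([t, 0, 0, 0], zero_mat 0 0, 1\<^sub>m 2) = t" using e by (simp add: gdet_def)
    ultimately show ?thesis by blast
  next
    assume e: "n = 3"
    have "([t], zero_mat 0 0, 1\<^sub>m 3) \<in> Gcal n" using t e by (simp add: Gcal_def)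
    moreover have "gdet n ([t], zero_mat 0 0, 1\<^sub>m 3) = t" using e by (simp add: gdet_def)
    ultimately show ?thesis by blast
  next
    assume e: "n = 4"
    have "([], 1\<^sub>m 2, dgm 4 f) \<in> Gcal n" using t e p4 by (simp add: Gcal_def dgm_carrier det_dgm)
    moreover have "gdet n ([], 1\<^sub>m 2, dgm 4 f) = t" using e p4 by (simp add: gdet_def det_dgm)
    ultimately show ?thesis by blast
  next
    assume e: "n = 5"
    have "([], 1\<^sub>m 5, dgm 5 f) \<in> Gcal n" using t e p5 by (simp add: Gcal_def dgm_carrier det_dgm)
    moreover have "gdet n ([], 1\<^sub>m 5, dgm 5 f) = t" using e p5 by (simp add: gdet_def det_dgm)
    ultimately show ?thesis by blast
  qed
qed

theorem lemma4p3:
  fixes K :: "'a::field set" and n :: nat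
  assumes "is_algebraic_closure_of K" and "perfect_field K" and "n \<in> {1..5}"
  shows "(\<forall>d (F :: 'a mpoly). F \<in> KX n K \<and> Gn_invariant n F \<and> homogeneous n d F \<longrightarrow>
            (\<exists>k. weight_invariant n k F \<and> (F \<noteq> 0 \<longrightarrow> d = wfac n * k)))
       \<and> (\<forall>F \<in> KX n K. Gn_invariant n F \<longrightarrow>
            (\<exists>D Fs. (\<forall>k\<le>D. Fs k \<in> KX n K \<and> weight_invariant n k (Fs k)) \<and>
                    F = (\<Sum>k\<le>D. Fs k)))
       \<and> (\<forall>D Fs. (\<forall>k\<le>D. Fs k \<in> KX n K \<and> weight_invariant n k (Fs k)) \<and>
                 (\<Sum>k\<le>D. Fs k) = (0 :: 'a mpoly) \<longrightarrow> (\<forall>k\<le>D. Fs k = 0))"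
proof -
  have ac: "alg_closed_field_type TYPE('a)" and sf: "subfield K"
    using assms(1) by (auto simp: is_algebraic_closure_of_def)
  have inf: "infinite (UNIV::'a set)" by (rule alg_closed_infinite[OF ac])
  note n = assms(3)
  have P1: "\<forall>d (F :: 'a mpoly). F \<in> KX n K \<and> Gn_invariant n F \<and> homogeneous n d F \<longrightarrow>
            (\<exists>k. weight_invariant n k F \<and> (F \<noteq> 0 \<longrightarrow> d = wfac n * k))"
    using part1[OF inf ac n] by blast
  have P2: "\<forall>F \<in> KX n K. Gn_invariant n F \<longrightarrow>
            (\<exists>D Fs. (\<forall>k\<le>D. Fs k \<in> KX n K \<and> weight_invariant n k (Fs k)) \<and> F = (\<Sum>k\<le>D. Fs k))"
  proof (intro ballI impI)
    fix F :: "'a mpoly" assume KX: "F \<in> KX n K" and inv: "Gn_invariant n F"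
    define D where "D = (\<Sum>m\<in>Poly_Mapping.keys F. wdeg n m)"
    have DD: "\<forall>m\<in>Poly_Mapping.keys F. wdeg n m \<le> D"
      unfolding D_def by (auto intro: member_le_sum)
    have wk: "\<exists>k. weight_invariant n k (hc n d F) \<and> (hc n d F \<noteq> 0 \<longrightarrow> d = wfac n * k)" for d
      by (rule part1[OF inf ac n hc_KX[OF sf KX] hc_inv[OF inf n inv] hc_hom])
    define Fs where "Fs k = hc n (wfac n * k) F" for k
    have FsW: "weight_invariant n k (Fs k)" for k
    proof (cases "Fs k = 0")
      case True then show ?thesis by (simp add: weight_invariant_def)
    next
      case False
      obtain k' where w: "weight_invariant n k' (Fs k)" and eq: "Fs k \<noteq> 0 \<longrightarrow> wfac n * k = wfac n * k'"
        using wk[of "wfac n * k"] unfolding Fs_def by blast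
      have "k = k'" using eq False wfac_pos[of n] by simp
      then show ?thesis using w by simp
    qed
    have "F = (\<Sum>k\<le>D. Fs k)"
    proof (rule poly_mapping_eqI)
      fix m
      show "Poly_Mapping.lookup F m = Poly_Mapping.lookup (\<Sum>k\<le>D. Fs k) m"
      proof (cases "m \<in> Poly_Mapping.keys F")
        case False
        then have l0: "Poly_Mapping.lookup F m = 0" by (simp add: in_keys_iff)
        have "Poly_Mapping.lookup (\<Sum>k\<le>D. Fs k) m = (\<Sum>k\<le>D. if wdeg n m = wfac n * k then Poly_Mapping.lookup F m else 0)"
          by (simp add: lookup_sum Fs_def lookup_hc)
        also have "\<dots> = 0" by (rule sum.neutral) (simp add: l0)
        finally show ?thesis using l0 by simp
      next
        case True
        have ne: "hc n (wdeg n m) F \<noteq> 0"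
        proof
          assume "hc n (wdeg n m) F = 0"
          then have "Poly_Mapping.lookup (hc n (wdeg n m) F) m = 0" by simp
          then show False using True by (simp add: lookup_hc in_keys_iff)
        qed
        obtain k0 where k0: "wdeg n m = wfac n * k0" using wk[of "wdeg n m"] ne by blast
        have k0D: "k0 \<le> D"
        proof -
          have "k0 \<le> wfac n * k0" using wfac_pos[of n] by simp
          also have "\<dots> \<le> D" using DD True unfolding k0[symmetric] by blast
          finally show ?thesis .
        qed
        have iff: "(wdeg n m = wfac n * k) = (k = k0)" for k using k0 wfac_pos[of n] by auto
        have "Poly_Mapping.lookup (\<Sum>k\<le>D. Fs k) m = (\<Sum>k\<le>D. if k = k0 then Poly_Mapping.lookup F m else 0)"
          by (simp add: lookup_sum Fs_def lookup_hc iff)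
        also have "\<dots> = Poly_Mapping.lookup F m" using k0D by simp
        finally show ?thesis by simp
      qed
    qed
    moreover have "\<forall>k\<le>D. Fs k \<in> KX n K \<and> weight_invariant n k (Fs k)"
      using FsW hc_KX[OF sf KX] by (simp add: Fs_def)
    ultimately show "\<exists>D Fs. (\<forall>k\<le>D. Fs k \<in> KX n K \<and> weight_invariant n k (Fs k)) \<and> F = (\<Sum>k\<le>D. Fs k)"
      by blast
  qed
  have P3: "\<forall>D Fs. (\<forall>k\<le>D. Fs k \<in> KX n K \<and> weight_invariant n k (Fs k)) \<and>
                 (\<Sum>k\<le>D. Fs k) = (0 :: 'a mpoly) \<longrightarrow> (\<forall>k\<le>D. Fs k = 0)"
  proof (intro allI impI)
    fix D and Fs :: "nat \<Rightarrow> 'a mpoly"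
    assume a: "(\<forall>k\<le>D. Fs k \<in> KX n K \<and> weight_invariant n k (Fs k)) \<and> (\<Sum>k\<le>D. Fs k) = 0"
    have z: "\<forall>k\<in>{..D}. mpeval \<phi> (Fs k) = 0" for \<phi>
    proof (rule vandermonde_gen[OF inf, where e = id])
      fix t :: 'a assume t: "t \<noteq> 0"
      obtain g where g: "g \<in> Gcal n" and gd: "gdet n g = t" using gt_exists[OF n t] by blast
      have "0 = mpeval (act n g \<phi>) (\<Sum>k\<le>D. Fs k)" using a by simp
      also have "\<dots> = (\<Sum>k\<le>D. t ^ k * mpeval \<phi> (Fs k))"
        unfolding mpeval_sum using a g gd by (intro sum.cong refl) (simp add: weight_invariant_def)
      finally show "(\<Sum>k\<in>{..D}. t ^ id k * mpeval \<phi> (Fs k)) = 0" by simp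
    qed auto
    fix k assume "k \<le> D"
    then show "Fs k = 0" using z by (intro mpoly_eval_zero[OF inf]) auto
  qed
  show ?thesis using P1 P2 P3 by blast
qed

end
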